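(* Let $c\ge 2$, let $\mathbf u_1,\dots,\mathbf u_c\in\mathbb R^2$, let $(\mathbf A_\star,\mathbf b_\star)\in \mathrm{GL}(2)\times\mathbb R^2$, and set $\mathbf v_i=\mathbf A_\star\mathbf u_i+\mathbf b_\star$ for $i=1,\dots,c$. Consider the target and observed $c$-channel signals $$\mathbf X_o=\sum_{i=1}^c \delta_{\mathbf v_i}\otimes\mathbf e_i,\qquad \mathbf X=\sum_{i=1}^c \delta_{\mathbf u_i}\otimes \mathbf e_i .$$ Let $\sigma>0$, $\sigma_0\ge 0$, and define $$\varphi_{L^2,\sigma}(\mathbf A,\mathbf b)=\frac{1}{2c}\Big\|\mathbf g_{\mathbf 0,\sigma^2\mathbf I-\sigma_0^2(\mathbf A^*\mathbf A)^{-1}}\ast\Big(\det{}^{1/2}(\mathbf A^*\mathbf A)\,(\mathbf g_{\mathbf 0,\sigma_0^2\mathbf I}\ast\mathbf X)\circ\tau_{\mathbf A,\mathbf b}\Big)-\mathbf g_{\mathbf 0,\sigma^2\mathbf I}\ast\mathbf X_o\Big\|_{L^2}^2$$ and its inverse parameterization $\varphi^{\mathrm{inv}}_{L^2,\sigma}(\mathbf A,\mathbf b)=\varphi_{L^2,\sigma}(\mathbf A^{-1},-\mathbf A^{-1}\mathbf b)$, where we assume $\sigma_0$ is such that the covariance $\sigma^2\mathbf I-\sigma_0^2\mathbf A\mathbf A^*$ appearing in $\varphi^{\mathrm{inv}}_{L^2,\sigma}(\mathbf A,\mathbf b)$ is positive semidefinite at every point $(\mathbf A,\mathbf b)$ at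 which the objective is evaluated below. Let $\mathbf U=[\mathbf u_1,\dots,\mathbf u_c]\in\mathbb R^{2\times c}$ and assume $\mathbf U\mathbf 1=\mathbf 0$ and $\operatorname{rank}(\mathbf U)=2$. Let $s_{\min}(\mathbf U),s_{\max}(\mathbf U)$ be the smallest and largest singular values of $\mathbf U$ and $\kappa=s_{\max}(\mathbf U)^2/s_{\min}(\mathbf U)^2$. Suppose $$\sigma^2\ \ge\ 2\,\frac{\max_i\|\mathbf u_i\|_2^2}{s_{\min}(\mathbf U)^2}\Big(s_{\max}(\mathbf U)^2\|\mathbf A_\star-\mathbf I\|_F^2+c\,\|\mathbf b_\star\|_2^2\Big),$$ and run gradient descent $$\mathbf A_{k+1}=\mathbf A_k-t_{\mathbf A}\nabla_{\mathbf A}\varphi^{\mathrm{inv}}_{L^2,\sigma}(\mathbf A_k,\mathbf b_k),\qquad \mathbf b_{k+1}=\mathbf b_k-t_{\mathbf b}\nabla_{\mathbf b}\varphi^{\mathrm{inv}}_{L^2,\sigma}(\mathbf A_k,\mathbf b_k)$$ with step sizes $t_{\mathbf A}=\dfrac{8\pi c\sigma^4}{s_{\max}(\mathbf U)^2}$, $t_{\mathbf b}=8\pi\sigma^4$, from $\mathbf A_0=\mathbf I$, $\mathbf b_0=\mathbf 0$. Then for all $k\ge 0$, $$\frac{8\pi\sigma^4}{t_{\mathbf A}}\|\mathbf A_k-\mathbf A_\star\|_F^2+\|\mathbf b_k-\mathbf b_\star\|_2^2\ \le\ \Big(1-\frac{1}{2\kappa}\Big)^{2k}\Big(\frac{8\pi\sigma^4}{t_{\mathbf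 A}}\|\mathbf I-\mathbf A_\star\|_F^2+\|\mathbf b_\star\|_2^2\Big).$$
   Context: Signals are $c$-channel (generalized) functions on $\mathbb R^2$, i.e. elements of $\mathbb R^{\mathbb R\times\mathbb R\times c}$; for $\mathbf S$ such a signal, $\|\mathbf S\|_{L^2}^2=\sum_{i=1}^c\|\mathbf S_i\|_{L^2(\mathbb R^2)}^2$. $\delta_{\mathbf p}$ is the Dirac distribution at $\mathbf p\in\mathbb R^2$, and $\delta_{\mathbf p}\otimes\mathbf e_i$ is the signal whose $i$-th channel is $\delta_{\mathbf p}$ and whose other channels are zero. For $\mathbf p\in\mathbb R^2$ and positive semidefinite $\mathbf M\in\mathbb R^{2\times2}$, $\mathbf g_{\mathbf p,\mathbf M}$ is the Gaussian density on $\mathbb R^2$ with mean $\mathbf p$ and covariance $\mathbf M$ (a Dirac at $\mathbf p$ if $\mathbf M=\mathbf 0$). Convolutions $\ast$ are applied channelwise. For $\mathbf A\in\mathbb R^{2\times2}$, $\mathbf b\in\mathbb R^2$, $(\mathbf S\circ\tau_{\mathbf A,\mathbf b})(\mathbf x)=\mathbf S(\mathbf A\mathbf x+\mathbf b)$. $\mathbf A^*$ is the transpose, $\mathbf 1\in\mathbb R^c$ the all-ones vector, and $\mathbf e_i$ the standard basis vectors. *)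

theory Defs
  imports "HOL-Probability.Probability"
begin

type_synonym pt = "real^2"
type_synonym mat2 = "real^2^2"

text \<open>A c-channel signal: channel i (for i in 1..c) is a (finite, nonnegative) measure
  on the plane, i.e. a generalized function; a locally integrable function f is
  identified with the measure of density f w.r.t. Lebesgue measure.\<close>
type_synonym signal = "nat \<Rightarrow> pt measure"

definition psd :: "mat2 \<Rightarrow> bool" where
  "psd M \<longleftrightarrow> transpose M = M \<and> (\<forall>x. 0 \<le> x \<bullet> (M *v x))"

definition std_gauss :: "pt measure" where
  "std_gauss = density lborel (\<lambda>x. ennreal (exp (- ((norm x) ^ 2) / 2) / (2 * pi)))"

text \<open>Gaussian with mean p and (positive semidefinite) covariance M, as the image of the
  standard Gaussian under x \<mapsto> p + L x with L L^T = M.  For M = 0 this is the Dirac at p.\<close>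
definition gauss :: "pt \<Rightarrow> mat2 \<Rightarrow> pt measure" where
  "gauss p M = distr std_gauss borel (\<lambda>x. p + (SOME L. L ** transpose L = M) *v x)"

definition dirac :: "pt \<Rightarrow> pt measure" where
  "dirac p = return borel p"

definition conv :: "pt measure \<Rightarrow> pt measure \<Rightarrow> pt measure" where
  "conv M N = distr (M \<Otimes>\<^sub>M N) borel (\<lambda>(x, y). x + y)"

definition conv_sig :: "pt measure \<Rightarrow> signal \<Rightarrow> signal" where
  "conv_sig G S = (\<lambda>i. conv G (S i))"

definition scale_sig :: "real \<Rightarrow> signal \<Rightarrow> signal" where
  "scale_sig r S = (\<lambda>i. scale_measure (ennreal r) (S i))"

text \<open>Composition with the affine map tau_{A,b}(x) = A x + b, i.e. (S o tau)(x) = S(A x + b),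
  for invertible A, extended to measures in the standard distributional way:
  if S has density f, the result has density x \<mapsto> f(A x + b).\<close>
definition comp_tau :: "signal \<Rightarrow> mat2 \<Rightarrow> pt \<Rightarrow> signal" where
  "comp_tau S A b = (\<lambda>i. scale_measure (ennreal (1 / \<bar>det A\<bar>))
                         (distr (S i) borel (\<lambda>y. matrix_inv A *v (y - b))))"

definition dens :: "pt measure \<Rightarrow> pt \<Rightarrow> real" where
  "dens \<mu> x = enn2real (RN_deriv lborel \<mu> x)"

definition l2_dist_sq :: "nat \<Rightarrow> signal \<Rightarrow> signal \<Rightarrow> real" where
  "l2_dist_sq c S T = (\<Sum>i=1..c. \<integral>x. (dens (S i) x - dens (T i) x)^2 \<partial>lborel)"

text \<open>The signal sum_{i=1}^c delta_{p i} \<otimes> e_i (channels outside 1..c are irrelevant).\<close>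
definition dirac_sig :: "(nat \<Rightarrow> pt) \<Rightarrow> signal" where
  "dirac_sig p = (\<lambda>i. dirac (p i))"

definition phi_L2 :: "nat \<Rightarrow> (nat \<Rightarrow> pt) \<Rightarrow> (nat \<Rightarrow> pt) \<Rightarrow> real \<Rightarrow> real \<Rightarrow> mat2 \<Rightarrow> pt \<Rightarrow> real" where
  "phi_L2 c u v \<sigma> \<sigma>0 A b =
     1 / (2 * real c) * l2_dist_sq c
       (conv_sig (gauss 0 (\<sigma>^2 *\<^sub>R mat 1 - \<sigma>0^2 *\<^sub>R matrix_inv (transpose A ** A)))
          (scale_sig (sqrt (det (transpose A ** A)))
             (comp_tau (conv_sig (gauss 0 (\<sigma>0^2 *\<^sub>R mat 1)) (dirac_sig u)) A b)))
       (conv_sig (gauss 0 (\<sigma>^2 *\<^sub>R mat 1)) (dirac_sig v))"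

definition phi_inv :: "nat \<Rightarrow> (nat \<Rightarrow> pt) \<Rightarrow> (nat \<Rightarrow> pt) \<Rightarrow> real \<Rightarrow> real \<Rightarrow> mat2 \<Rightarrow> pt \<Rightarrow> real" where
  "phi_inv c u v \<sigma> \<sigma>0 A b = phi_L2 c u v \<sigma> \<sigma>0 (matrix_inv A) (- (matrix_inv A *v b))"

text \<open>Partial gradients (w.r.t. the Frobenius inner product on matrices, Euclidean on vectors).\<close>
definition grad_A :: "(mat2 \<Rightarrow> pt \<Rightarrow> real) \<Rightarrow> mat2 \<Rightarrow> pt \<Rightarrow> mat2" where
  "grad_A f A b = (SOME G. GDERIV (\<lambda>A'. f A' b) A :> G)"

definition grad_b :: "(mat2 \<Rightarrow> pt \<Rightarrow> real) \<Rightarrow> mat2 \<Rightarrow> pt \<Rightarrow> pt" where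
  "grad_b f A b = (SOME g. GDERIV (\<lambda>b'. f A b') b :> g)"

definition frob_norm :: "mat2 \<Rightarrow> real" where
  "frob_norm M = sqrt (\<Sum>i\<in>UNIV. \<Sum>j\<in>UNIV. (M $ i $ j)^2)"

text \<open>U U^T for U = [u_1, ..., u_c] in R^{2 x c}.\<close>
definition gram :: "nat \<Rightarrow> (nat \<Rightarrow> pt) \<Rightarrow> mat2" where
  "gram c u = (\<chi> j k. \<Sum>i=1..c. u i $ j * u i $ k)"

definition eigvals :: "mat2 \<Rightarrow> real set" where
  "eigvals M = {l. \<exists>x. x \<noteq> 0 \<and> M *v x = l *\<^sub>R x}"

text \<open>Largest / smallest singular value of the 2 x c matrix U (c >= 2): square roots of the
  largest / smallest eigenvalue of U U^T.\<close>
definition s_max :: "nat \<Rightarrow> (nat \<Rightarrow> pt) \<Rightarrow> real" where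
  "s_max c u = sqrt (Max (eigvals (gram c u)))"

definition s_min :: "nat \<Rightarrow> (nat \<Rightarrow> pt) \<Rightarrow> real" where
  "s_min c u = sqrt (Min (eigvals (gram c u)))"

end

theory Submission
  imports Defs
begin

lemma Basis_pt: "(Basis :: pt set) = {axis 1 1, axis 2 1}"
  by (auto simp: Basis_vec_def UNIV_2)

lemma axis_12_neq: "axis (1::2) (1::real) \<noteq> axis 2 1"
proof
  assume "axis (1::2) (1::real) = axis 2 1"
  then have "(axis (1::2) (1::real)) $ 1 = (axis (2::2) (1::real)) $ 1" by simp
  then show False by (simp add: axis_def)
qed

lemma prod_Basis_pt: "(\<Prod>b\<in>(Basis::pt set). f b) = f (axis 1 1) * f (axis 2 1)"
  using axis_12_neq by (simp add: Basis_pt)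

lemma vector2_eq: "(vector [s,t] :: pt) = s *\<^sub>R axis 1 1 + t *\<^sub>R axis 2 1"
  by (simp add: vec_eq_iff forall_2 axis_def)

lemma meas_vec2[measurable]: "(\<lambda>(s,t). vector [s,t] :: pt) \<in> borel_measurable (lborel \<Otimes>\<^sub>M lborel)"
proof -
  have "(\<lambda>(s,t). vector [s,t] :: pt) \<in> borel_measurable borel"
    unfolding vector2_eq
    by (intro borel_measurable_continuous_onI)
       (auto simp: case_prod_beta intro!: continuous_on_add continuous_on_scaleR continuous_on_fst continuous_on_snd continuous_on_id continuous_on_const)
  then show ?thesis by (simp add: borel_prod[symmetric])
qed

lemma lborel_pt: "distr (lborel \<Otimes>\<^sub>M lborel) borel (\<lambda>(s,t). vector [s,t] :: pt) = lborel"
proof (rule lborel_eqI[symmetric])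
  show "sets (distr (lborel \<Otimes>\<^sub>M lborel) borel (\<lambda>(s, t). vector [s, t] :: pt)) = sets borel" by simp
  fix l u :: pt assume le: "\<And>b. b \<in> Basis \<Longrightarrow> l \<bullet> b \<le> u \<bullet> b"
  have pre: "(\<lambda>(s, t). vector [s, t] :: pt) -` box l u = {l$1<..<u$1} \<times> {l$2<..<u$2}"
    by (auto simp: mem_box_cart forall_2)
  show "emeasure (distr (lborel \<Otimes>\<^sub>M lborel) borel (\<lambda>(s, t). vector [s, t] :: pt)) (box l u) = (\<Prod>b\<in>Basis. (u - l) \<bullet> b)"
  proof -
    have "l$1 \<le> u$1" "l$2 \<le> u$2" using le[of "axis 1 1"] le[of "axis 2 1"] by (auto simp: Basis_pt inner_axis)
    then show ?thesis
      by (simp add: emeasure_distr pre lborel.emeasure_pair_measure_Times prod_Basis_pt inner_axis ennreal_mult)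
  qed
qed

lemma nn_integral_pt:
  assumes [measurable]: "f \<in> borel_measurable (borel :: pt measure)"
  shows "(\<integral>\<^sup>+x. f x \<partial>lborel) = (\<integral>\<^sup>+s. \<integral>\<^sup>+t. f (vector [s,t]) \<partial>lborel \<partial>lborel)"
proof -
  have "(\<integral>\<^sup>+x. f x \<partial>lborel) = (\<integral>\<^sup>+x. f x \<partial>distr (lborel \<Otimes>\<^sub>M lborel) borel (\<lambda>(s,t). vector [s,t] :: pt))"
    by (simp add: lborel_pt)
  also have "\<dots> = (\<integral>\<^sup>+p. f (case p of (s,t) \<Rightarrow> vector [s,t]) \<partial>(lborel \<Otimes>\<^sub>M lborel))"
    by (simp add: nn_integral_distr)
  also have "\<dots> = (\<integral>\<^sup>+s. \<integral>\<^sup>+t. f (vector [s,t]) \<partial>lborel \<partial>lborel)"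
    by (subst lborel.nn_integral_fst[symmetric]) (auto simp: case_prod_beta)
  finally show ?thesis .
qed

lemma mv_1: "((A::mat2) *v x) $ 1 = A$1$1 * x$1 + A$1$2 * x$2"
  by (simp add: matrix_vector_mult_def sum_2)
lemma mv_2: "((A::mat2) *v x) $ 2 = A$2$1 * x$1 + A$2$2 * x$2"
  by (simp add: matrix_vector_mult_def sum_2)
lemma mm_ij: "((A::mat2) ** B) $ i $ j = A$i$1 * B$1$j + A$i$2 * B$2$j"
  by (simp add: matrix_matrix_mult_def sum_2)
lemma vec2_eq_iff: "(x::pt) = y \<longleftrightarrow> x$1 = y$1 \<and> x$2 = y$2"
  by (simp add: vec_eq_iff forall_2)
lemma mat2_eq_iff: "(A::mat2) = B \<longleftrightarrow> A$1$1 = B$1$1 \<and> A$1$2 = B$1$2 \<and> A$2$1 = B$2$1 \<and> A$2$2 = B$2$2"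
  by (simp add: vec_eq_iff forall_2)
lemma mat1_ij: "(mat 1 :: mat2) $ 1 $ 1 = 1" "(mat 1 :: mat2) $ 2 $ 2 = 1" "(mat 1 :: mat2) $ 1 $ 2 = 0" "(mat 1 :: mat2) $ 2 $ 1 = 0"
  by (simp_all add: mat_def)
lemma det2: "det (A::mat2) = A$1$1 * A$2$2 - A$1$2 * A$2$1"
  by (simp add: det_2)

definition inv2 :: "mat2 \<Rightarrow> mat2" where
  "inv2 A = (\<chi> i j. (if i = 1 then (if j = 1 then A$2$2 else - A$1$2) else (if j = 1 then - A$2$1 else A$1$1)) / det A)"

lemma inv2_ij: "inv2 A $1$1 = A$2$2 / det A" "inv2 A $1$2 = - A$1$2 / det A"
  "inv2 A $2$1 = - A$2$1 / det A" "inv2 A $2$2 = A$1$1 / det A"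
  by (simp_all add: inv2_def)

lemma inv2_right: "det A \<noteq> 0 \<Longrightarrow> A ** inv2 A = mat 1"
  by (simp add: mat2_eq_iff mm_ij inv2_ij mat1_ij field_simps; simp add: det2 algebra_simps)
lemma inv2_left: "det A \<noteq> 0 \<Longrightarrow> inv2 A ** A = mat 1"
  by (simp add: mat2_eq_iff mm_ij inv2_ij mat1_ij field_simps; simp add: det2 algebra_simps)

lemma matrix_inv_2: assumes "det A \<noteq> 0" shows "matrix_inv A = inv2 A"
proof -
  have ex: "A ** inv2 A = mat 1 \<and> inv2 A ** A = mat 1" using assms inv2_right inv2_left by auto
  then have s: "A ** matrix_inv A = mat 1 \<and> matrix_inv A ** A = mat 1"
    unfolding matrix_inv_def by (rule someI)
  have "matrix_inv A = (inv2 A ** A) ** matrix_inv A" using ex by (simp add: matrix_mul_lid)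
  also have "\<dots> = inv2 A ** (A ** matrix_inv A)" by (simp add: matrix_mul_assoc)
  also have "\<dots> = inv2 A" using s by (simp add: matrix_mul_rid)
  finally show ?thesis .
qed

lemma invertible_det2: "invertible (A::mat2) \<longleftrightarrow> det A \<noteq> 0"
  using invertible_det_nz by blast

lemma det_inv2: assumes "det A \<noteq> 0" shows "det (inv2 A) = 1 / det A"
proof -
  have "det (inv2 A) = (A$1$1 * A$2$2 - A$1$2 * A$2$1) / (det A * det A)"
    using assms by (subst det2) (simp add: inv2_ij field_simps)
  also have "\<dots> = 1 / det A" using assms by (simp add: det2[symmetric])
  finally show ?thesis .
qed

lemma meas_mv[measurable]: "(\<lambda>x. (L::mat2) *v x) \<in> borel_measurable borel"
  by (intro borel_measurable_continuous_onI linear_continuous_on) (simp add: matrix_vector_mul_linear linear_conv_bounded_linear)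

lemma lborel_linear_pt:
  fixes L :: mat2 and p :: pt
  assumes d: "det L \<noteq> 0"
  shows "lborel = density (distr lborel borel (\<lambda>x. p + L *v x)) (\<lambda>_. ennreal \<bar>det L\<bar>)"
proof (rule lborel_eqI)
  show "sets (density (distr lborel borel (\<lambda>x. p + L *v x)) (\<lambda>_. ennreal \<bar>det L\<bar>)) = sets borel" by simp
  fix l u :: pt assume le: "\<And>b. b \<in> Basis \<Longrightarrow> l \<bullet> b \<le> u \<bullet> b"
  let ?T = "\<lambda>x. p + L *v x"
  let ?Li = "inv2 L"
  have TB: "?T -` box l u = (\<lambda>y. ?Li *v y) ` box (l - p) (u - p)"
  proof (rule set_eqI, rule iffI)
    fix x assume "x \<in> ?T -` box l u"
    then have "L *v x \<in> box (l - p) (u - p)" by (fastforce simp: mem_box_cart algebra_simps)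
    moreover have "x = ?Li *v (L *v x)" using inv2_left[OF d] by (simp add: matrix_vector_mul_assoc)
    ultimately show "x \<in> (\<lambda>y. ?Li *v y) ` box (l - p) (u - p)" by blast
  next
    fix x assume "x \<in> (\<lambda>y. ?Li *v y) ` box (l - p) (u - p)"
    then obtain y where y: "y \<in> box (l - p) (u - p)" "x = ?Li *v y" by blast
    then have "L *v x = y" using inv2_right[OF d] by (simp add: matrix_vector_mul_assoc)
    with y show "x \<in> ?T -` box l u" by (fastforce simp: mem_box_cart algebra_simps)
  qed
  have mT: "?T \<in> borel_measurable borel" by measurable
  have bor: "?T -` box l u \<in> sets lborel"
    using measurable_sets[OF mT borel_open[OF open_box]] by simp
  have lm: "(\<lambda>y. ?Li *v y) ` box (l - p) (u - p) \<in> lmeasurable"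
    by (rule measurable_linear_image) (auto simp: matrix_vector_mul_linear)
  have "emeasure lborel (?T -` box l u) = emeasure lebesgue (?T -` box l u)"
    using bor by simp
  also have "\<dots> = ennreal (measure lebesgue ((\<lambda>y. ?Li *v y) ` box (l - p) (u - p)))"
    using lm TB by (simp add: emeasure_eq_measure2)
  also have "\<dots> = ennreal (\<bar>det ?Li\<bar> * measure lebesgue (box (l - p) (u - p)))"
    by (subst measure_linear_image) (auto simp: matrix_vector_mul_linear)
  also have "measure lebesgue (box (l - p) (u - p)) = (\<Prod>b\<in>Basis. (u - l) \<bullet> b)"
    using le by (simp add: measure_lborel_box_eq inner_diff_left)
  finally have e: "emeasure lborel (?T -` box l u) = ennreal (\<bar>1 / det L\<bar> * (\<Prod>b\<in>Basis. (u - l) \<bullet> b))"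
    using det_inv2[OF d] by simp
  have pos: "0 \<le> (\<Prod>b\<in>Basis. (u - l) \<bullet> b)" using le by (auto intro!: prod_nonneg simp: inner_diff_left)
  show "emeasure (density (distr lborel borel ?T) (\<lambda>_. ennreal \<bar>det L\<bar>)) (box l u) = (\<Prod>b\<in>Basis. (u - l) \<bullet> b)"
    using d pos by (simp add: emeasure_density emeasure_distr e nn_integral_cmult_indicator
         ennreal_mult[symmetric] abs_mult[symmetric] del: ennreal_mult')
qed

lemma nn_integral_linear_pt:
  fixes L :: mat2 and p :: pt
  assumes d: "det L \<noteq> 0" and [measurable]: "f \<in> borel_measurable borel"
  shows "(\<integral>\<^sup>+y. f y \<partial>lborel) = ennreal \<bar>det L\<bar> * (\<integral>\<^sup>+x. f (p + L *v x) \<partial>lborel)"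
  apply (subst lborel_linear_pt[OF d, of p])
  apply (simp add: nn_integral_density nn_integral_distr nn_integral_cmult)
  done

lemma nn_integral_normal_density: "0 < \<sigma> \<Longrightarrow> (\<integral>\<^sup>+x. ennreal (normal_density \<mu> \<sigma> x) \<partial>lborel) = 1"
proof -
  assume "0 < \<sigma>"
  interpret prob_space "density lborel (normal_density \<mu> \<sigma>)" by (rule prob_space_normal_density) fact
  have "emeasure (density lborel (normal_density \<mu> \<sigma>)) UNIV = 1" using emeasure_space_1 by simp
  then show ?thesis by (simp add: emeasure_density)
qed

lemma gauss1:
  fixes \<alpha> \<beta> :: real assumes a: "\<alpha> > 0"
  shows "(\<integral>\<^sup>+t. ennreal (exp (-(\<alpha>/2)*t^2 + \<beta>*t)) \<partial>lborel) = ennreal (sqrt (2*pi/\<alpha>) * exp (\<beta>^2/(2*\<alpha>)))"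
proof -
  let ?\<mu> = "\<beta>/\<alpha>" and ?\<sigma> = "1 / sqrt \<alpha>"
  have eq: "exp (-(\<alpha>/2)*t^2 + \<beta>*t) = sqrt (2*pi/\<alpha>) * exp (\<beta>^2/(2*\<alpha>)) * normal_density ?\<mu> ?\<sigma> t" for t
  proof -
    have s: "sqrt (2 * pi * ?\<sigma>\<^sup>2) = sqrt (2*pi/\<alpha>)" using a by (simp add: power_divide)
    have E: "-(\<alpha>/2)*t^2 + \<beta>*t = \<beta>^2/(2*\<alpha>) + (-(t - ?\<mu>)\<^sup>2/ (2 * ?\<sigma>\<^sup>2))"
      using a by (simp add: power_divide field_simps power2_eq_square)
    have "exp (-(\<alpha>/2)*t^2 + \<beta>*t) = exp (\<beta>^2/(2*\<alpha>)) * exp (-(t - ?\<mu>)\<^sup>2/ (2 * ?\<sigma>\<^sup>2))"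
      by (simp only: E exp_add)
    moreover have "sqrt (2*pi/\<alpha>) > 0" using a by simp
    ultimately show ?thesis unfolding normal_density_def s using a by (simp add: field_simps)
  qed
  have "(\<integral>\<^sup>+t. ennreal (exp (-(\<alpha>/2)*t^2 + \<beta>*t)) \<partial>lborel)
      = (\<integral>\<^sup>+t. ennreal (sqrt (2*pi/\<alpha>) * exp (\<beta>^2/(2*\<alpha>))) * ennreal (normal_density ?\<mu> ?\<sigma> t) \<partial>lborel)"
    by (rule nn_integral_cong) (subst eq, rule ennreal_mult', use a in simp)
  also have "\<dots> = ennreal (sqrt (2*pi/\<alpha>) * exp (\<beta>^2/(2*\<alpha>)))"
    using a by (simp add: nn_integral_cmult nn_integral_normal_density)
  finally show ?thesis .
qed

lemma ennreal_mult3: "0 \<le> S \<Longrightarrow> 0 \<le> X \<Longrightarrow> 0 \<le> Y \<Longrightarrow> ennreal (S*X) * ennreal Y = ennreal (S*(X*Y))"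
  by (simp add: ennreal_mult[symmetric] mult.assoc)

lemma gauss2:
  fixes k11 k12 k22 h1 h2 :: real
  assumes k22: "k22 > 0" and D: "k11 * k22 - k12^2 > 0"
  shows "(\<integral>\<^sup>+x. \<integral>\<^sup>+t. ennreal (exp (-(k11* x^2 + 2*k12* x*t + k22*t^2)/2 + h1* x + h2*t)) \<partial>lborel \<partial>lborel)
    = ennreal (2*pi / sqrt (k11 * k22 - k12^2) * exp ((k22*h1^2 - 2*k12*h1*h2 + k11*h2^2) / (2*(k11 * k22 - k12^2))))"
proof -
  define Dt where "Dt = k11 * k22 - k12^2"
  have Dp: "Dt > 0" using D by (simp add: Dt_def)
  have inner: "(\<integral>\<^sup>+t. ennreal (exp (-(k11* x^2 + 2*k12* x*t + k22*t^2)/2 + h1* x + h2*t)) \<partial>lborel)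
     = ennreal (sqrt (2*pi/k22) * exp (h2^2/(2*k22))) * ennreal (exp (-((Dt/k22)/2)* x^2 + (h1 - k12*h2/k22)* x))" for x
  proof -
    have e: "exp (-(k11* x^2 + 2*k12* x*t + k22*t^2)/2 + h1* x + h2*t) = exp (-(k22/2)*t^2 + (h2 - k12* x)*t) * exp (-(k11/2)* x^2 + h1* x)" for t
      by (simp add: exp_add[symmetric] field_simps)
    have "(\<integral>\<^sup>+t. ennreal (exp (-(k11* x^2 + 2*k12* x*t + k22*t^2)/2 + h1* x + h2*t)) \<partial>lborel)
       = (\<integral>\<^sup>+t. ennreal (exp (-(k22/2)*t^2 + (h2 - k12* x)*t)) * ennreal (exp (-(k11/2)* x^2 + h1* x)) \<partial>lborel)"
      by (rule nn_integral_cong) (simp only: e, rule ennreal_mult', simp)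
    also have "\<dots> = ennreal (sqrt (2*pi/k22) * exp ((h2 - k12* x)^2/(2*k22))) * ennreal (exp (-(k11/2)* x^2 + h1* x))"
      using gauss1[OF k22, of "h2 - k12 * x"] by (simp add: nn_integral_multc)
    also have "\<dots> = ennreal (sqrt (2*pi/k22) * exp (h2^2/(2*k22))) * ennreal (exp (-((Dt/k22)/2)* x^2 + (h1 - k12*h2/k22)* x))"
    proof -
      have "(h2 - k12* x)^2/(2*k22) + (-(k11/2)* x^2 + h1* x) = h2^2/(2*k22) + (-((Dt/k22)/2)* x^2 + (h1 - k12*h2/k22)* x)"
        using k22 by (simp add: Dt_def field_simps power2_eq_square)
      then have "exp ((h2 - k12* x)^2/(2*k22)) * exp (-(k11/2)* x^2 + h1* x) = exp (h2^2/(2*k22)) * exp (-((Dt/k22)/2)* x^2 + (h1 - k12*h2/k22)* x)"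
        by (simp add: exp_add[symmetric])
      then show ?thesis
        using k22 by (subst (1 2) ennreal_mult3) auto
    qed
    finally show ?thesis .
  qed
  have "(\<integral>\<^sup>+x. \<integral>\<^sup>+t. ennreal (exp (-(k11* x^2 + 2*k12* x*t + k22*t^2)/2 + h1* x + h2*t)) \<partial>lborel \<partial>lborel)
      = ennreal (sqrt (2*pi/k22) * exp (h2^2/(2*k22))) * ennreal (sqrt (2*pi/(Dt/k22)) * exp ((h1 - k12*h2/k22)^2/(2*(Dt/k22))))"
  proof -
    have "(\<integral>\<^sup>+x. \<integral>\<^sup>+t. ennreal (exp (-(k11*x^2 + 2*k12*x*t + k22*t^2)/2 + h1*x + h2*t)) \<partial>lborel \<partial>lborel)
       = (\<integral>\<^sup>+x. ennreal (sqrt (2*pi/k22) * exp (h2^2/(2*k22))) * ennreal (exp (-((Dt/k22)/2)*x^2 + (h1 - k12*h2/k22)*x)) \<partial>lborel)"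
      by (rule nn_integral_cong) (rule inner)
    also have "\<dots> = ennreal (sqrt (2*pi/k22) * exp (h2^2/(2*k22))) * (\<integral>\<^sup>+x. ennreal (exp (-((Dt/k22)/2)*x^2 + (h1 - k12*h2/k22)*x)) \<partial>lborel)"
      by (rule nn_integral_cmult) simp
    also have "\<dots> = ennreal (sqrt (2*pi/k22) * exp (h2^2/(2*k22))) * ennreal (sqrt (2*pi/(Dt/k22)) * exp ((h1 - k12*h2/k22)^2/(2*(Dt/k22))))"
      using Dp k22 by (subst gauss1) auto
    finally show ?thesis .
  qed
  also have "\<dots> = ennreal (2*pi / sqrt Dt * exp ((k22*h1^2 - 2*k12*h1*h2 + k11*h2^2) / (2*Dt)))"
  proof -
    have sq: "sqrt (2*pi/k22) * sqrt (2*pi/(Dt/k22)) = 2*pi / sqrt Dt"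
    proof -
      have "2*pi/k22 * (2*pi/(Dt/k22)) = (2*pi)^2/Dt" using k22 by (simp add: field_simps power2_eq_square)
      then have "sqrt (2*pi/k22) * sqrt (2*pi/(Dt/k22)) = sqrt ((2*pi)^2/Dt)" by (simp add: real_sqrt_mult[symmetric])
      also have "\<dots> = 2*pi / sqrt Dt" by (simp only: real_sqrt_divide real_sqrt_abs abs_of_nonneg[of "2*pi"]) simp
      finally show ?thesis .
    qed
    have ex: "h2^2/(2*k22) + (h1 - k12*h2/k22)^2/(2*(Dt/k22)) = (k22*h1^2 - 2*k12*h1*h2 + k11*h2^2) / (2*Dt)"
      using k22 Dp by (simp add: Dt_def field_simps power2_eq_square)
    let ?X = "sqrt (2*pi/k22) * exp (h2^2/(2*k22))" and ?Y = "sqrt (2*pi/(Dt/k22)) * exp ((h1 - k12*h2/k22)^2/(2*(Dt/k22)))"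
    have "ennreal ?X * ennreal ?Y = ennreal (?X * ?Y)"
      using k22 Dp by (subst ennreal_mult[symmetric]) auto
    also have "?X * ?Y = (sqrt (2*pi/k22) * sqrt (2*pi/(Dt/k22))) * (exp (h2^2/(2*k22)) * exp ((h1 - k12*h2/k22)^2/(2*(Dt/k22))))"
      by (simp add: mult_ac)
    also have "\<dots> = 2*pi / sqrt Dt * exp ((k22*h1^2 - 2*k12*h1*h2 + k11*h2^2) / (2*Dt))"
      by (simp only: sq exp_add[symmetric] ex)
    finally show ?thesis .
  qed
  finally show ?thesis by (simp add: Dt_def)
qed

definition phi :: "pt \<Rightarrow> real" where
  "phi x = exp (- ((norm x) ^ 2) / 2) / (2 * pi)"

lemma phi_pos: "phi x > 0" by (simp add: phi_def)

lemma norm_sq_pt: "(norm (x::pt))^2 = (x$1)^2 + (x$2)^2"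
  by (simp add: norm_vec_def L2_set_def sum_2)

lemma meas_phi[measurable]: "phi \<in> borel_measurable borel"
  unfolding phi_def by measurable

lemma std_gauss_phi: "std_gauss = density lborel (\<lambda>x. ennreal (phi x))"
  by (simp add: std_gauss_def phi_def)

lemma conv_phi:
  fixes a :: pt and B :: mat2
  defines "b11 \<equiv> B$1$1" and "b12 \<equiv> B$1$2" and "b21 \<equiv> B$2$1" and "b22 \<equiv> B$2$2"
  defines "m11 \<equiv> 1 + b11^2 + b12^2" and "m12 \<equiv> b11*b21 + b12*b22" and "m22 \<equiv> 1 + b21^2 + b22^2"
  defines "Dm \<equiv> m11*m22 - m12^2"
  shows "(\<integral>\<^sup>+x. ennreal (phi (a - B *v x) * phi x) \<partial>lborel)
     = ennreal (exp (- (m22*(a$1)^2 - 2*m12*(a$1)*(a$2) + m11*(a$2)^2) / (2*Dm)) / (2*pi* sqrt Dm))"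
proof -
  define k11 where "k11 = 1 + b11^2 + b21^2"
  define k12 where "k12 = b11*b12 + b21*b22"
  define k22 where "k22 = 1 + b12^2 + b22^2"
  define h1 where "h1 = b11*(a$1) + b21*(a$2)"
  define h2 where "h2 = b12*(a$1) + b22*(a$2)"
  define na where "na = (a$1)^2 + (a$2)^2"
  have DK: "k11*k22 - k12^2 = Dm"
    by (simp add: k11_def k12_def k22_def Dm_def m11_def m12_def m22_def power2_eq_square algebra_simps)
  have Dpos: "Dm > 0"
  proof -
    have "Dm = 1 + b11^2 + b12^2 + b21^2 + b22^2 + (b11*b22 - b12*b21)^2"
      by (simp add: Dm_def m11_def m12_def m22_def power2_eq_square algebra_simps)
    moreover have "0 \<le> b11^2 + b12^2 + b21^2 + b22^2 + (b11*b22 - b12*b21)^2" by simp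
    ultimately show ?thesis by linarith
  qed
  have k22p: "k22 > 0" by (simp add: k22_def add_pos_nonneg)
  have pt: "phi (a - B *v vector [s,t]) * phi (vector [s,t]) =
     1/(4*pi^2) * exp (-na/2) * exp (-(k11* s^2 + 2*k12* s*t + k22*t^2)/2 + h1* s + h2*t)" for s t
  proof -
    have "phi (a - B *v vector [s,t]) * phi (vector [s,t]) =
       exp (- ((a$1 - (b11* s + b12*t))^2 + (a$2 - (b21* s + b22*t))^2) / 2) / (2*pi) * (exp (- (s^2 + t^2) / 2) / (2*pi))"
      by (simp add: phi_def norm_sq_pt mv_1 mv_2 b11_def b12_def b21_def b22_def)
    also have "\<dots> = 1/(4*pi^2) * (exp (- ((a$1 - (b11* s + b12*t))^2 + (a$2 - (b21* s + b22*t))^2) / 2) * exp (- (s^2 + t^2) / 2))"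
      by (simp add: power2_eq_square)
    also have "exp (- ((a$1 - (b11* s + b12*t))^2 + (a$2 - (b21* s + b22*t))^2) / 2) * exp (- (s^2 + t^2) / 2)
       = exp (-na/2) * exp (-(k11* s^2 + 2*k12* s*t + k22*t^2)/2 + h1* s + h2*t)"
    proof -
      have "- ((a$1 - (b11* s + b12*t))^2 + (a$2 - (b21* s + b22*t))^2) / 2 + - (s^2 + t^2) / 2
           = -na/2 + (-(k11* s^2 + 2*k12* s*t + k22*t^2)/2 + h1* s + h2*t)"
        by (simp add: na_def k11_def k12_def k22_def h1_def h2_def power2_eq_square field_simps)
      then show ?thesis by (simp only: exp_add[symmetric])
    qed
    finally show ?thesis by (simp add: mult.assoc)
  qed
  have "(\<integral>\<^sup>+x. ennreal (phi (a - B *v x) * phi x) \<partial>lborel)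
     = (\<integral>\<^sup>+s. \<integral>\<^sup>+t. ennreal (phi (a - B *v vector [s,t]) * phi (vector [s,t])) \<partial>lborel \<partial>lborel)"
    by (rule nn_integral_pt) measurable
  also have "\<dots> = (\<integral>\<^sup>+s. \<integral>\<^sup>+t. ennreal (1/(4*pi^2) * exp (-na/2)) * ennreal (exp (-(k11* s^2 + 2*k12* s*t + k22*t^2)/2 + h1* s + h2*t)) \<partial>lborel \<partial>lborel)"
    by (intro nn_integral_cong) (simp only: pt, rule ennreal_mult', simp)
  also have "\<dots> = ennreal (1/(4*pi^2) * exp (-na/2)) * (\<integral>\<^sup>+s. \<integral>\<^sup>+t. ennreal (exp (-(k11* s^2 + 2*k12* s*t + k22*t^2)/2 + h1* s + h2*t)) \<partial>lborel \<partial>lborel)"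
    by (simp add: nn_integral_cmult)
  also have "\<dots> = ennreal (1/(4*pi^2) * exp (-na/2)) * ennreal (2*pi / sqrt Dm * exp ((k22*h1^2 - 2*k12*h1*h2 + k11*h2^2) / (2*Dm)))"
    using gauss2[OF k22p, of k11 k12 h1 h2] DK Dpos by simp
  also have "\<dots> = ennreal (exp (- (m22*(a$1)^2 - 2*m12*(a$1)*(a$2) + m11*(a$2)^2) / (2*Dm)) / (2*pi* sqrt Dm))"
  proof -
    have id: "na * Dm - (k22*h1^2 - 2*k12*h1*h2 + k11*h2^2) = m22*(a$1)^2 - 2*m12*(a$1)*(a$2) + m11*(a$2)^2"
      by (simp add: na_def Dm_def k11_def k12_def k22_def h1_def h2_def m11_def m12_def m22_def power2_eq_square algebra_simps)
    have ex: "-na/2 + (k22*h1^2 - 2*k12*h1*h2 + k11*h2^2) / (2*Dm) = - (m22*(a$1)^2 - 2*m12*(a$1)*(a$2) + m11*(a$2)^2) / (2*Dm)"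
    proof -
      have "-na/2 + (k22*h1^2 - 2*k12*h1*h2 + k11*h2^2) / (2*Dm) = - (na * Dm - (k22*h1^2 - 2*k12*h1*h2 + k11*h2^2)) / (2*Dm)"
        using Dpos by (simp add: field_simps)
      then show ?thesis by (simp only: id)
    qed
    have "ennreal (1/(4*pi^2) * exp (-na/2)) * ennreal (2*pi / sqrt Dm * exp ((k22*h1^2 - 2*k12*h1*h2 + k11*h2^2) / (2*Dm)))
        = ennreal ((1/(4*pi^2) * exp (-na/2)) * (2*pi / sqrt Dm * exp ((k22*h1^2 - 2*k12*h1*h2 + k11*h2^2) / (2*Dm))))"
      using Dpos by (subst ennreal_mult[symmetric]) auto
    also have "(1/(4*pi^2) * exp (-na/2)) * (2*pi / sqrt Dm * exp ((k22*h1^2 - 2*k12*h1*h2 + k11*h2^2) / (2*Dm)))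
        = (exp (-na/2) * exp ((k22*h1^2 - 2*k12*h1*h2 + k11*h2^2) / (2*Dm))) / (2*pi* sqrt Dm)"
      by (simp add: field_simps power2_eq_square)
    also have "exp (-na/2) * exp ((k22*h1^2 - 2*k12*h1*h2 + k11*h2^2) / (2*Dm)) = exp (- (m22*(a$1)^2 - 2*m12*(a$1)*(a$2) + m11*(a$2)^2) / (2*Dm))"
      by (simp only: exp_add[symmetric] ex)
    finally show ?thesis .
  qed
  finally show ?thesis .
qed

definition gd :: "real \<Rightarrow> pt \<Rightarrow> pt \<Rightarrow> real" where
  "gd \<sigma> p x = exp (- ((norm (x - p)) ^ 2) / (2 * \<sigma> ^ 2)) / (2 * pi * \<sigma> ^ 2)"

lemma meas_gd[measurable]: "gd \<sigma> p \<in> borel_measurable borel"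
  unfolding gd_def by measurable

lemma gd_nonneg: "gd \<sigma> p x \<ge> 0" by (simp add: gd_def)

definition qf :: "mat2 \<Rightarrow> pt \<Rightarrow> real" where
  "qf M a = M$2$2 * (a$1)^2 - 2 * M$1$2 * (a$1) * (a$2) + M$1$1 * (a$2)^2"

lemma tr_ij: "transpose (A::mat2) $ i $ j = A $ j $ i" by (simp add: transpose_def)

lemma conv_phi':
  fixes a :: pt and B :: mat2
  shows "(\<integral>\<^sup>+x. ennreal (phi (a - B *v x) * phi x) \<partial>lborel)
     = ennreal (exp (- qf (mat 1 + B ** transpose B) a / (2 * det (mat 1 + B ** transpose B)))
               / (2*pi * sqrt (det (mat 1 + B ** transpose B))))"
proof -
  let ?M = "mat 1 + B ** transpose B"
  have e: "?M$1$1 = 1 + (B$1$1)^2 + (B$1$2)^2" "?M$1$2 = B$1$1*B$2$1 + B$1$2*B$2$2"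
     "?M$2$1 = B$1$1*B$2$1 + B$1$2*B$2$2" "?M$2$2 = 1 + (B$2$1)^2 + (B$2$2)^2"
    by (simp_all add: mm_ij tr_ij mat1_ij power2_eq_square)
  have q: "qf ?M a = (1 + (B$2$1)^2 + (B$2$2)^2)*(a$1)^2 - 2*(B$1$1*B$2$1 + B$1$2*B$2$2)*(a$1)*(a$2) + (1 + (B$1$1)^2 + (B$1$2)^2)*(a$2)^2"
    unfolding qf_def e by simp
  have dm: "det ?M = (1 + (B$1$1)^2 + (B$1$2)^2) * (1 + (B$2$1)^2 + (B$2$2)^2) - (B$1$1*B$2$1 + B$1$2*B$2$2)^2"
    unfolding det2[of ?M] e by (simp add: power2_eq_square)
  show ?thesis
    unfolding q dm by (rule conv_phi)
qed

lemma alg_K: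
  fixes L :: mat2 and \<tau> :: real
  assumes d: "det L \<noteq> 0"
  defines "M \<equiv> \<tau>^2 *\<^sub>R (inv2 L ** transpose (inv2 L))"
  shows "det M = \<tau>^4 / (det L)^2" and "qf M (inv2 L *v z) = \<tau>^2 * (norm z)^2 / (det L)^2"
proof -
  have e: "M$1$1 = \<tau>^2 * ((L$2$2)^2 + (L$1$2)^2) / (det L)^2"
          "M$1$2 = - (\<tau>^2 * (L$2$2 * L$2$1 + L$1$2 * L$1$1) / (det L)^2)"
          "M$2$2 = \<tau>^2 * ((L$2$1)^2 + (L$1$1)^2) / (det L)^2"
          "M$2$1 = - (\<tau>^2 * (L$2$2 * L$2$1 + L$1$2 * L$1$1) / (det L)^2)"
    using d by (simp_all add: M_def mm_ij tr_ij inv2_ij power2_eq_square field_simps)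
  have dd: "det L = L$1$1 * L$2$2 - L$1$2 * L$2$1" by (rule det2)
  show "det M = \<tau>^4 / (det L)^2"
    unfolding det2[of M] e using d
    by (simp add: field_simps power2_eq_square) (simp add: dd algebra_simps power2_eq_square power4_eq_xxxx)
  show "qf M (inv2 L *v z) = \<tau>^2 * (norm z)^2 / (det L)^2"
    unfolding qf_def e norm_sq_pt mv_1 mv_2 inv2_ij using d
    by (simp add: field_simps power2_eq_square) (simp add: dd algebra_simps power2_eq_square)
qed

lemma mat_entries_simps:
  "((A::mat2) + B) $ i $ j = A$i$j + B$i$j" "((A::mat2) - B) $ i $ j = A$i$j - B$i$j"
  "(c *\<^sub>R (A::mat2)) $ i $ j = c * A$i$j"
  by simp_all

lemma alg_1:
  fixes L1 L2 :: mat2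
  assumes C: "L1 ** transpose L1 + L2 ** transpose L2 = \<tau>^2 *\<^sub>R mat 1" and d: "det L2 \<noteq> 0"
  shows "mat 1 + (inv2 L2 ** L1) ** transpose (inv2 L2 ** L1) = \<tau>^2 *\<^sub>R (inv2 L2 ** transpose (inv2 L2))"
proof -
  let ?Li = "inv2 L2"
  have "(?Li ** L1) ** transpose (?Li ** L1) = ?Li ** (L1 ** transpose L1) ** transpose ?Li"
    by (simp add: matrix_transpose_mul matrix_mul_assoc)
  also have "L1 ** transpose L1 = \<tau>^2 *\<^sub>R mat 1 - L2 ** transpose L2"
    using C by (simp add: eq_diff_eq)
  finally have e: "(?Li ** L1) ** transpose (?Li ** L1) = ?Li ** (\<tau>^2 *\<^sub>R mat 1 - L2 ** transpose L2) ** transpose ?Li" .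
  show ?thesis unfolding e
    using d by (simp add: mat2_eq_iff mm_ij tr_ij inv2_ij mat1_ij field_simps power2_eq_square; simp add: det2 algebra_simps)
qed

lemma emeasure_std_distr:
  assumes [measurable]: "f \<in> borel_measurable borel" and A: "A \<in> sets borel"
  shows "emeasure (distr std_gauss borel f) A = (\<integral>\<^sup>+x. ennreal (phi x) * indicator A (f x) \<partial>lborel)"
proof -
  have "emeasure (distr std_gauss borel f) A = emeasure std_gauss (f -` A)"
    using A by (simp add: emeasure_distr std_gauss_phi)
  also have "\<dots> = (\<integral>\<^sup>+x. ennreal (phi x) * indicator (f -` A) x \<partial>lborel)"
  proof -
    have "f -` A \<in> sets lborel" using measurable_sets[OF assms(1) A] by simp
    then show ?thesis by (simp add: std_gauss_phi emeasure_density)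
  qed
  finally show ?thesis by (simp add: indicator_def)
qed

lemma distr_std_affine:
  fixes L :: mat2 and q :: pt
  assumes d: "det L \<noteq> 0"
  shows "distr std_gauss borel (\<lambda>x. q + L *v x) = density lborel (\<lambda>y. ennreal (phi (inv2 L *v (y - q)) / \<bar>det L\<bar>))"
proof (rule measure_eqI)
  show "sets (distr std_gauss borel (\<lambda>x. q + L *v x)) = sets (density lborel (\<lambda>y. ennreal (phi (inv2 L *v (y - q)) / \<bar>det L\<bar>)))"
    by simp
  fix A assume "A \<in> sets (distr std_gauss borel (\<lambda>x. q + L *v x))"
  then have A[measurable]: "A \<in> sets borel" by simp
  have "emeasure (density lborel (\<lambda>y. ennreal (phi (inv2 L *v (y - q)) / \<bar>det L\<bar>))) A
     = (\<integral>\<^sup>+y. ennreal (phi (inv2 L *v (y - q)) / \<bar>det L\<bar>) * indicator A y \<partial>lborel)"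
    by (simp add: emeasure_density)
  also have "\<dots> = ennreal \<bar>det L\<bar> * (\<integral>\<^sup>+x. ennreal (phi (inv2 L *v (q + L *v x - q)) / \<bar>det L\<bar>) * indicator A (q + L *v x) \<partial>lborel)"
    by (rule nn_integral_linear_pt[OF d]) measurable
  also have "\<dots> = (\<integral>\<^sup>+x. ennreal \<bar>det L\<bar> * (ennreal (phi x / \<bar>det L\<bar>) * indicator A (q + L *v x)) \<partial>lborel)"
    using inv2_left[OF d] by (subst nn_integral_cmult[symmetric]) (auto simp: matrix_vector_mul_assoc)
  also have "\<dots> = (\<integral>\<^sup>+x. ennreal (phi x) * indicator A (q + L *v x) \<partial>lborel)"
  proof (rule nn_integral_cong)
    fix x
    have "ennreal \<bar>det L\<bar> * ennreal (phi x / \<bar>det L\<bar>) = ennreal (phi x)"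
      using d phi_pos[of x] by (subst ennreal_mult[symmetric]) auto
    then show "ennreal \<bar>det L\<bar> * (ennreal (phi x / \<bar>det L\<bar>) * indicator A (q + L *v x)) = ennreal (phi x) * indicator A (q + L *v x)"
      by (simp add: mult.assoc[symmetric])
  qed
  also have "\<dots> = emeasure (distr std_gauss borel (\<lambda>x. q + L *v x)) A"
    by (rule emeasure_std_distr[symmetric]) measurable
  finally show "emeasure (distr std_gauss borel (\<lambda>x. q + L *v x)) A = emeasure (density lborel (\<lambda>y. ennreal (phi (inv2 L *v (y - q)) / \<bar>det L\<bar>))) A" ..
qed

lemma mzero_l: "(0::mat2) ** X = 0" by (simp add: mat2_eq_iff mm_ij)
lemma mzero_r: "(X::mat2) ** 0 = 0" by (simp add: mat2_eq_iff mm_ij)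

lemma det_scaled_id: "det (c *\<^sub>R (mat 1 :: mat2)) = c^2"
  by (simp add: det2 mat1_ij power2_eq_square)

lemma det_LLt: "det ((L::mat2) ** transpose L) = (det L)^2"
  by (simp add: det_mul det_transpose power2_eq_square)

lemma qf_id: "qf (mat 1) a = (norm a)^2"
  by (simp add: qf_def mat1_ij norm_sq_pt)

lemma iso_density:
  fixes L :: mat2
  assumes C: "L ** transpose L = \<tau>^2 *\<^sub>R mat 1" and t: "\<tau> > 0"
  shows "det L \<noteq> 0" and "\<bar>det L\<bar> = \<tau>^2" and "\<And>z. phi (inv2 L *v z) / \<bar>det L\<bar> = gd \<tau> 0 z"
proof -
  have dd: "(det L)^2 = \<tau>^4" using arg_cong[OF C, of det] by (simp add: det_LLt det_scaled_id power_mult[symmetric])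
  then show d: "det L \<noteq> 0" using t by auto
  from dd have ad: "\<bar>det L\<bar> = \<tau>^2"
    by (metis abs_of_nonneg power2_abs power_mult real_sqrt_abs real_sqrt_pow2 zero_le_power2 mult_2_right numeral_Bit0 power2_eq_square abs_power2 pos2 power_even_eq)
  then show "\<bar>det L\<bar> = \<tau>^2" .
  have C0: "0 ** transpose 0 + L ** transpose L = \<tau>^2 *\<^sub>R (mat 1 :: mat2)" using C by (simp add: mzero_l)
  have M: "mat 1 = \<tau>^2 *\<^sub>R (inv2 L ** transpose (inv2 L))"
    using alg_1[OF C0 d] by (simp add: mzero_r mzero_l)
  fix z :: pt
  have "(norm (inv2 L *v z))^2 = \<tau>^2 * (norm z)^2 / (det L)^2"
    using alg_K(2)[OF d, of \<tau> z] by (simp add: M[symmetric] qf_id)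
  then have h: "\<tau>^4 * (norm (inv2 L *v z))^2 = \<tau>^2 * (norm z)^2" using dd t
    by (simp add: field_simps)
  have "\<tau>^2 * (\<tau>^2 * (norm (inv2 L *v z))^2 - (norm z)^2) = 0"
    using h by (simp add: algebra_simps power4_eq_xxxx power2_eq_square)
  then have "\<tau>^2 * (norm (inv2 L *v z))^2 = (norm z)^2" using t by simp
  then have n: "(norm (inv2 L *v z))^2 = (norm z)^2 / \<tau>^2" using t by (simp add: field_simps)
  show "phi (inv2 L *v z) / \<bar>det L\<bar> = gd \<tau> 0 z"
    unfolding phi_def gd_def ad n by (simp add: field_simps)
qed

lemma distr_std_iso:
  fixes L :: mat2
  assumes C: "L ** transpose L = \<tau>^2 *\<^sub>R mat 1" and t: "\<tau> > 0"
  shows "distr std_gauss borel (\<lambda>x. q + L *v x) = density lborel (gd \<tau> q)"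
proof -
  have "gd \<tau> q y = gd \<tau> 0 (y - q)" for y by (simp add: gd_def)
  then show ?thesis
    unfolding distr_std_affine[OF iso_density(1)[OF C t]] iso_density(3)[OF C t] by simp
qed

lemma phi_vec: "phi (vector [s,t]) = 1/(2*pi) * exp (-(1* s^2 + 2*0* s*t + 1*t^2)/2 + 0* s + 0*t)"
  by (simp add: phi_def norm_sq_pt)

lemma nn_integral_phi: "(\<integral>\<^sup>+x. ennreal (phi x) \<partial>lborel) = 1"
proof -
  have "(\<integral>\<^sup>+x. ennreal (phi x) \<partial>lborel) = (\<integral>\<^sup>+s. \<integral>\<^sup>+t. ennreal (phi (vector [s,t])) \<partial>lborel \<partial>lborel)"
    by (rule nn_integral_pt) measurable
  also have "\<dots> = (\<integral>\<^sup>+s. \<integral>\<^sup>+t. ennreal (1/(2*pi)) * ennreal (exp (-(1* s^2 + 2*0* s*t + 1*t^2)/2 + 0* s + 0*t)) \<partial>lborel \<partial>lborel)"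
    by (intro nn_integral_cong) (simp only: phi_vec, rule ennreal_mult', simp)
  also have "\<dots> = ennreal (1/(2*pi)) * (\<integral>\<^sup>+s. \<integral>\<^sup>+t. ennreal (exp (-(1* s^2 + 2*0* s*t + 1*t^2)/2 + 0* s + 0*t)) \<partial>lborel \<partial>lborel)"
    by (simp add: nn_integral_cmult)
  also have "\<dots> = ennreal (1/(2*pi)) * ennreal (2*pi / sqrt (1*1 - 0^2) * exp ((1*0^2 - 2*0*0*0 + 1*0^2) / (2*(1*1 - 0^2))))"
    by (subst gauss2) auto
  also have "\<dots> = 1" by (simp add: ennreal_mult[symmetric])
  finally show ?thesis .
qed

lemma prob_space_std: "prob_space std_gauss"
  by (rule prob_spaceI) (simp add: std_gauss_phi emeasure_density nn_integral_phi)

lemma prob_space_distr_std[simp]: "f \<in> borel_measurable borel \<Longrightarrow> prob_space (distr std_gauss borel f)"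
  by (rule prob_space.prob_space_distr[OF prob_space_std]) (simp add: std_gauss_phi)

lemma nn_integral_distr_std:
  assumes [measurable]: "f \<in> borel_measurable borel" "g \<in> borel_measurable borel"
  shows "(\<integral>\<^sup>+y. g y \<partial>distr std_gauss borel f) = (\<integral>\<^sup>+x. ennreal (phi x) * g (f x) \<partial>lborel)"
  by (simp add: nn_integral_distr std_gauss_phi nn_integral_density)

lemma emeasure_conv:
  assumes sf: "sigma_finite_measure N" and [simp]: "sets M = sets borel" "sets N = sets borel" and A: "A \<in> sets borel"
  shows "emeasure (conv M N) A = (\<integral>\<^sup>+x. \<integral>\<^sup>+y. indicator A (x + y) \<partial>N \<partial>M)"
proof -
  have m: "(\<lambda>(x, y). x + y) \<in> measurable (M \<Otimes>\<^sub>M N) (borel :: pt measure)"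
    by (simp add: measurable_cong_sets[OF sets_pair_measure_cong[OF assms(2,3)] refl] borel_prod[symmetric])
  have "emeasure (conv M N) A = emeasure (M \<Otimes>\<^sub>M N) ((\<lambda>(x, y). x + y) -` A \<inter> space (M \<Otimes>\<^sub>M N))"
    unfolding conv_def using A m by (simp add: emeasure_distr)
  also have "\<dots> = (\<integral>\<^sup>+z. indicator A (case z of (x,y) \<Rightarrow> x + y) \<partial>(M \<Otimes>\<^sub>M N))"
  proof -
    have sp: "space M = UNIV" "space N = UNIV"
      using sets_eq_imp_space_eq[OF assms(2)] sets_eq_imp_space_eq[OF assms(3)] by auto
    have S: "(\<lambda>(x, y). x + y) -` A \<inter> space (M \<Otimes>\<^sub>M N) \<in> sets (M \<Otimes>\<^sub>M N)"
      using measurable_sets[OF m A] .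
    show ?thesis
      unfolding nn_integral_indicator[OF S, symmetric]
      by (rule nn_integral_cong) (simp add: indicator_def space_pair_measure sp split: prod.splits)
  qed
  also have "\<dots> = (\<integral>\<^sup>+x. \<integral>\<^sup>+y. indicator A (x + y) \<partial>N \<partial>M)"
  proof -
    interpret N: sigma_finite_measure N by fact
    have "(\<lambda>z. indicator A (case z of (x,y) \<Rightarrow> x + y) :: ennreal) \<in> borel_measurable (M \<Otimes>\<^sub>M N)"
      using m A by measurable
    from N.nn_integral_fst[OF this] show ?thesis by simp
  qed
  finally show ?thesis .
qed

lemma nn_integral_shift_pt:
  fixes f :: "pt \<Rightarrow> ennreal" and c :: pt
  assumes [measurable]: "f \<in> borel_measurable borel"
  shows "(\<integral>\<^sup>+y. f (c + y) \<partial>lborel) = (\<integral>\<^sup>+w. f w \<partial>lborel)"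
  using nn_integral_linear_pt[of "mat 1" f c] by simp

lemma conv_gauss:
  fixes L1 L2 :: mat2 and q1 q2 :: pt
  assumes C: "L1 ** transpose L1 + L2 ** transpose L2 = \<tau>^2 *\<^sub>R mat 1" and t: "\<tau> > 0" and d: "det L2 \<noteq> 0"
  shows "conv (distr std_gauss borel (\<lambda>x. q1 + L1 *v x)) (distr std_gauss borel (\<lambda>y. q2 + L2 *v y))
         = density lborel (gd \<tau> (q1 + q2))"
proof (rule measure_eqI)
  let ?\<mu> = "distr std_gauss borel (\<lambda>x. q1 + L1 *v x)" and ?\<nu> = "distr std_gauss borel (\<lambda>y. q2 + L2 *v y)"
  show "sets (conv ?\<mu> ?\<nu>) = sets (density lborel (gd \<tau> (q1 + q2)))" by (simp add: conv_def)
  fix A assume "A \<in> sets (conv ?\<mu> ?\<nu>)"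
  then have A[measurable]: "A \<in> sets borel" by (simp add: conv_def)
  define \<rho> where "\<rho> y = phi (inv2 L2 *v (y - q2)) / \<bar>det L2\<bar>" for y
  have [measurable]: "\<rho> \<in> borel_measurable borel" unfolding \<rho>_def by measurable
  have \<nu>: "?\<nu> = density lborel (\<lambda>y. ennreal (\<rho> y))"
    unfolding \<rho>_def by (rule distr_std_affine[OF d])
  have sf: "sigma_finite_measure ?\<nu>"
  proof -
    have "(\<lambda>y. q2 + L2 *v y) \<in> borel_measurable borel" by measurable
    then show ?thesis by (rule prob_space_imp_sigma_finite[OF prob_space_distr_std])
  qed
  have "emeasure (conv ?\<mu> ?\<nu>) A = (\<integral>\<^sup>+x. \<integral>\<^sup>+y. indicator A (x + y) \<partial>?\<nu> \<partial>?\<mu>)"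
    by (rule emeasure_conv[OF sf]) auto
  also have "\<dots> = (\<integral>\<^sup>+x. \<integral>\<^sup>+y. ennreal (\<rho> y) * indicator A (x + y) \<partial>lborel \<partial>?\<mu>)"
    unfolding \<nu> by (simp add: nn_integral_density)
  also have "\<dots> = (\<integral>\<^sup>+x. ennreal (phi x) * (\<integral>\<^sup>+y. ennreal (\<rho> y) * indicator A (q1 + L1 *v x + y) \<partial>lborel) \<partial>lborel)"
    by (rule nn_integral_distr_std) measurable
  also have "\<dots> = (\<integral>\<^sup>+x. ennreal (phi x) * (\<integral>\<^sup>+w. ennreal (\<rho> (w - (q1 + L1 *v x))) * indicator A w \<partial>lborel) \<partial>lborel)"
  proof (rule nn_integral_cong)
    fix x
    have "(\<integral>\<^sup>+y. ennreal (\<rho> y) * indicator A (q1 + L1 *v x + y) \<partial>lborel)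
        = (\<integral>\<^sup>+y. (\<lambda>w. ennreal (\<rho> (w - (q1 + L1 *v x))) * indicator A w) ((q1 + L1 *v x) + y) \<partial>lborel)"
      by simp
    also have "\<dots> = (\<integral>\<^sup>+w. ennreal (\<rho> (w - (q1 + L1 *v x))) * indicator A w \<partial>lborel)"
      by (rule nn_integral_shift_pt) measurable
    finally show "ennreal (phi x) * (\<integral>\<^sup>+y. ennreal (\<rho> y) * indicator A (q1 + L1 *v x + y) \<partial>lborel)
      = ennreal (phi x) * (\<integral>\<^sup>+w. ennreal (\<rho> (w - (q1 + L1 *v x))) * indicator A w \<partial>lborel)" by simp
  qed
  also have "\<dots> = (\<integral>\<^sup>+x. \<integral>\<^sup>+w. ennreal (phi x) * (ennreal (\<rho> (w - (q1 + L1 *v x))) * indicator A w) \<partial>lborel \<partial>lborel)"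
    by (simp add: nn_integral_cmult)
  also have "\<dots> = (\<integral>\<^sup>+w. \<integral>\<^sup>+x. ennreal (phi x) * (ennreal (\<rho> (w - (q1 + L1 *v x))) * indicator A w) \<partial>lborel \<partial>lborel)"
    by (rule lborel_pair.Fubini'[symmetric]) measurable
  also have "\<dots> = (\<integral>\<^sup>+w. ennreal (gd \<tau> (q1 + q2) w) * indicator A w \<partial>lborel)"
  proof (rule nn_integral_cong)
    fix w
    let ?Li = "inv2 L2" let ?B = "inv2 L2 ** L1" let ?a = "inv2 L2 *v (w - (q1 + q2))"
    have r: "\<rho> (w - (q1 + L1 *v x)) = phi (?a - ?B *v x) / \<bar>det L2\<bar>" for x
    proof -
      have "w - (q1 + L1 *v x) - q2 = (w - (q1 + q2)) - L1 *v x" by (simp add: algebra_simps)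
      then have "inv2 L2 *v (w - (q1 + L1 *v x) - q2) = ?a - ?B *v x"
        by (simp only: matrix_vector_mult_diff_distrib matrix_vector_mul_assoc)
      then show ?thesis unfolding \<rho>_def by simp
    qed
    have "(\<integral>\<^sup>+x. ennreal (phi x) * (ennreal (\<rho> (w - (q1 + L1 *v x))) * indicator A w) \<partial>lborel)
        = (\<integral>\<^sup>+x. ennreal (phi (?a - ?B *v x) * phi x) * ennreal (1 / \<bar>det L2\<bar>) * indicator A w \<partial>lborel)"
    proof (rule nn_integral_cong)
      fix x
      have "ennreal (phi x) * ennreal (\<rho> (w - (q1 + L1 *v x))) = ennreal (phi (?a - ?B *v x) * phi x) * ennreal (1 / \<bar>det L2\<bar>)"
        unfolding r using phi_pos[of x] phi_pos[of "?a - ?B *v x"]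
        by (simp add: ennreal_mult[symmetric] field_simps)
      then show "ennreal (phi x) * (ennreal (\<rho> (w - (q1 + L1 *v x))) * indicator A w) = ennreal (phi (?a - ?B *v x) * phi x) * ennreal (1 / \<bar>det L2\<bar>) * indicator A w"
        by (simp add: mult.assoc[symmetric])
    qed
    also have "\<dots> = (\<integral>\<^sup>+x. ennreal (phi (?a - ?B *v x) * phi x) \<partial>lborel) * (ennreal (1 / \<bar>det L2\<bar>) * indicator A w)"
      by (simp add: nn_integral_multc mult.assoc)
    also have "(\<integral>\<^sup>+x. ennreal (phi (?a - ?B *v x) * phi x) \<partial>lborel) = ennreal (gd \<tau> (q1 + q2) w * \<bar>det L2\<bar>)"
    proof -
      let ?M = "mat 1 + ?B ** transpose ?B"
      have M: "?M = \<tau>^2 *\<^sub>R (?Li ** transpose ?Li)" by (rule alg_1[OF C d])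
      have dM: "det ?M = \<tau>^4 / (det L2)^2" unfolding M by (rule alg_K(1)[OF d])
      have qM: "qf ?M ?a = \<tau>^2 * (norm (w - (q1 + q2)))^2 / (det L2)^2" unfolding M by (rule alg_K(2)[OF d])
      have sq: "sqrt (\<tau>^4 / (det L2)^2) = \<tau>^2 / \<bar>det L2\<bar>"
      proof -
        have "sqrt (\<tau>^4) = \<tau>^2" using real_sqrt_abs[of "\<tau>^2"] by (simp add: power_mult[symmetric])
        then show ?thesis by (simp add: real_sqrt_divide)
      qed
      have ex: "qf ?M ?a / (2 * det ?M) = (norm (w - (q1 + q2)))^2 / (2 * \<tau>^2)"
        unfolding dM qM using d t by (simp add: field_simps power_mult[symmetric] power2_eq_square power4_eq_xxxx)
      have ex2: "- qf ?M ?a / (2 * det ?M) = - ((norm (w - (q1 + q2)))^2) / (2 * \<tau>^2)"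
        using ex by (simp add: minus_divide_left[symmetric])
      show ?thesis
        using d t by (subst conv_phi', subst ex2, subst dM, subst sq) (simp add: gd_def field_simps)
    qed
    finally show "(\<integral>\<^sup>+x. ennreal (phi x) * (ennreal (\<rho> (w - (q1 + L1 *v x))) * indicator A w) \<partial>lborel) = ennreal (gd \<tau> (q1 + q2) w) * indicator A w"
      using d by (simp add: ennreal_mult[symmetric] gd_nonneg mult.assoc[symmetric])
  qed
  also have "\<dots> = emeasure (density lborel (gd \<tau> (q1 + q2))) A"
    by (simp add: emeasure_density)
  finally show "emeasure (conv ?\<mu> ?\<nu>) A = emeasure (density lborel (gd \<tau> (q1 + q2))) A" .
qed

lemma matrix_inv_unique2: assumes "det (X::mat2) \<noteq> 0" "X ** Y = mat 1" shows "matrix_inv X = Y"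
proof -
  have "matrix_inv X = inv2 X ** (X ** Y)" using assms by (simp add: matrix_inv_2 matrix_mul_rid)
  also have "\<dots> = Y" using inv2_left[OF assms(1)] by (simp add: matrix_mul_assoc matrix_mul_lid)
  finally show ?thesis .
qed

definition mk2 :: "real \<Rightarrow> real \<Rightarrow> real \<Rightarrow> real \<Rightarrow> mat2" where
  "mk2 a b c d = (\<chi> i j. if i = 1 then (if j = 1 then a else b) else (if j = 1 then c else d))"

lemma mk2_ij[simp]: "mk2 a b c d $1$1 = a" "mk2 a b c d $1$2 = b" "mk2 a b c d $2$1 = c" "mk2 a b c d $2$2 = d"
  by (simp_all add: mk2_def)

lemma mk2_LLt: "mk2 a 0 c d ** transpose (mk2 a 0 c d) = mk2 (a*a) (a*c) (a*c) (c*c + d*d)"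
  by (simp add: mat2_eq_iff mm_ij tr_ij)

lemma psd_sqrt: assumes "psd M" shows "\<exists>L::mat2. L ** transpose L = M"
proof -
  from assms have sym: "transpose M = M" and pos: "\<And>x. 0 \<le> x \<bullet> (M *v x)" by (auto simp: psd_def)
  have m21: "M$2$1 = M$1$2" using arg_cong[OF sym, of "\<lambda>X. X$1$2"] by (simp add: tr_ij)
  have q: "0 \<le> M$1$1 * x1^2 + 2 * M$1$2 * x1 * x2 + M$2$2 * x2^2" for x1 x2
    using pos[of "vector [x1, x2]"] m21
    by (simp add: inner_vec_def sum_2 mv_1 mv_2 power2_eq_square algebra_simps)
  have m11: "M$1$1 \<ge> 0" using q[of 1 0] by simp
  have m22: "M$2$2 \<ge> 0" using q[of 0 1] by simp
  have Meq: "M = mk2 (M$1$1) (M$1$2) (M$1$2) (M$2$2)" using m21 by (simp add: mat2_eq_iff)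
  show ?thesis
  proof (cases "M$1$1 = 0")
    case True
    have "M$1$2 = 0"
    proof (rule ccontr)
      assume ne: "M$1$2 \<noteq> 0"
      have "0 \<le> 2 * M$1$2 * (- (M$2$2 + 1) / (2 * M$1$2)) * 1 + M$2$2 * 1^2"
        using q[of "- (M$2$2 + 1) / (2 * M$1$2)" 1] True by simp
      also have "\<dots> = -1" using ne by (simp add: field_simps)
      finally show False by simp
    qed
    then have "mk2 0 0 0 (sqrt (M$2$2)) ** transpose (mk2 0 0 0 (sqrt (M$2$2))) = M"
      using True m22 by (subst Meq, simp only: mk2_LLt) simp
    then show ?thesis by blast
  next
    case False
    then have p: "M$1$1 > 0" using m11 by simp
    define e where "e = M$2$2 - (M$1$2)^2 / M$1$1"
    have dnn: "e \<ge> 0"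
    proof -
      have "0 \<le> M$1$1 * (- M$1$2 / M$1$1)^2 + 2 * M$1$2 * (- M$1$2 / M$1$1) * 1 + M$2$2 * 1^2" by (rule q)
      also have "\<dots> = e" using p by (simp add: e_def field_simps power2_eq_square)
      finally show ?thesis .
    qed
    have a: "sqrt (M$1$1) * sqrt (M$1$1) = M$1$1" using p by simp
    have c: "sqrt (M$1$1) * (M$1$2 / sqrt (M$1$1)) = M$1$2" using p by simp
    have d: "M$1$2 / sqrt (M$1$1) * (M$1$2 / sqrt (M$1$1)) + sqrt e * sqrt e = M$2$2"
      using p dnn by (simp add: e_def power2_eq_square[symmetric] power_divide)
    have "mk2 (sqrt (M$1$1)) 0 (M$1$2 / sqrt (M$1$1)) (sqrt e) ** transpose (mk2 (sqrt (M$1$1)) 0 (M$1$2 / sqrt (M$1$1)) (sqrt e)) = M"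
      by (subst (3) Meq, simp only: mk2_LLt a c d)
    then show ?thesis by blast
  qed
qed

lemma gauss_sqrt: "psd M \<Longrightarrow> (SOME L::mat2. L ** transpose L = M) ** transpose (SOME L::mat2. L ** transpose L = M) = M"
  by (drule psd_sqrt) (rule someI_ex)

lemma conv_dirac:
  assumes G: "sets G = sets borel"
  shows "conv G (dirac u) = distr G borel (\<lambda>x. x + u)"
proof (rule measure_eqI)
  show "sets (conv G (dirac u)) = sets (distr G borel (\<lambda>x. x + u))" by (simp add: conv_def)
  fix A assume "A \<in> sets (conv G (dirac u))"
  then have A: "A \<in> sets borel" by (simp add: conv_def)
  have mG: "(\<lambda>x. x + u) \<in> measurable G borel"
    by (subst measurable_cong_sets[OF G refl]) simp
  have sf: "sigma_finite_measure (dirac u)"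
    unfolding dirac_def by (rule prob_space_imp_sigma_finite) (rule prob_space_return, simp)
  have sd: "sets (dirac u) = sets borel" by (simp add: dirac_def)
  have "emeasure (conv G (dirac u)) A = (\<integral>\<^sup>+x. \<integral>\<^sup>+y. indicator A (x + y) \<partial>dirac u \<partial>G)"
    by (rule emeasure_conv[OF sf G sd A])
  also have "\<dots> = (\<integral>\<^sup>+x. indicator A (x + u) \<partial>G)"
  proof (rule nn_integral_cong)
    fix x
    have "(\<lambda>y. indicator A (x + y) :: ennreal) \<in> borel_measurable borel"
      using A by measurable
    then show "(\<integral>\<^sup>+y. indicator A (x + y) \<partial>dirac u) = indicator A (x + u)"
      unfolding dirac_def by (rule nn_integral_return[rotated]) simp
  qed
  also have "\<dots> = (\<integral>\<^sup>+x. indicator A x \<partial>distr G borel (\<lambda>x. x + u))"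
    using A by (subst nn_integral_distr[OF mG]) auto
  also have "\<dots> = emeasure (distr G borel (\<lambda>x. x + u)) A"
    using A by (subst nn_integral_indicator) auto
  finally show "emeasure (conv G (dirac u)) A = emeasure (distr G borel (\<lambda>x. x + u)) A" .
qed

lemma distr_std_comp:
  assumes [measurable]: "f \<in> borel_measurable borel" "g \<in> borel_measurable borel"
  shows "distr (distr std_gauss borel f) borel g = distr std_gauss borel (\<lambda>x. g (f x))"
proof -
  have "f \<in> measurable std_gauss borel" by (simp add: std_gauss_phi)
  then show ?thesis by (subst distr_distr) (auto simp: comp_def)
qed

lemma conv_dirac_std:
  "conv (distr std_gauss borel (\<lambda>x. q + L *v x)) (dirac u) = distr std_gauss borel (\<lambda>x. (q + u) + L *v x)"
proof -
  have "conv (distr std_gauss borel (\<lambda>x. q + L *v x)) (dirac u) = distr (distr std_gauss borel (\<lambda>x. q + L *v x)) borel (\<lambda>x. x + u)"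
    by (rule conv_dirac) simp
  also have "\<dots> = distr std_gauss borel (\<lambda>x. q + L *v x + u)"
    by (rule distr_std_comp) measurable
  finally show ?thesis by (simp add: algebra_simps)
qed

lemma psd_scaled_id: "psd (c *\<^sub>R (mat 1 :: mat2))" if "c \<ge> 0" for c
proof -
  have "0 \<le> x $ 1 * (c * x $ 1) + x $ 2 * (c * x $ 2)" for x :: pt
  proof -
    have "x $ 1 * (c * x $ 1) + x $ 2 * (c * x $ 2) = c * ((x$1)^2 + (x$2)^2)" by (simp add: power2_eq_square algebra_simps)
    then show ?thesis using that by simp
  qed
  then show ?thesis by (simp add: psd_def transpose_scalar inner_vec_def sum_2 mv_1 mv_2 mat1_ij)
qed

lemma scale_id_LLt: "(A ** L) ** transpose (A ** L) = c *\<^sub>R (A ** transpose A)" if "L ** transpose L = c *\<^sub>R (mat 1::mat2)" for A L :: mat2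
proof -
  have "(A ** L) ** transpose (A ** L) = A ** (L ** transpose L) ** transpose A"
    by (simp add: matrix_transpose_mul matrix_mul_assoc)
  also have "\<dots> = c *\<^sub>R (A ** transpose A)" unfolding that
    by (simp add: mat2_eq_iff mm_ij tr_ij mat1_ij algebra_simps)
  finally show ?thesis .
qed

lemma gauss0: "gauss 0 M = distr std_gauss borel (\<lambda>x. 0 + (SOME L::mat2. L ** transpose L = M) *v x)"
  by (simp add: gauss_def)

lemma chan2:
  assumes s: "\<sigma> > 0"
  shows "conv (gauss 0 (\<sigma>^2 *\<^sub>R mat 1)) (dirac v) = density lborel (gd \<sigma> v)"
proof -
  let ?L = "SOME L::mat2. L ** transpose L = \<sigma>^2 *\<^sub>R mat 1"
  have L: "?L ** transpose ?L = \<sigma>^2 *\<^sub>R mat 1" by (rule gauss_sqrt[OF psd_scaled_id]) simp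
  show ?thesis unfolding gauss0 conv_dirac_std using distr_std_iso[OF L s] by simp
qed

lemma chan1:
  fixes A :: mat2 and b u :: pt
  assumes dA: "det A \<noteq> 0" and s: "\<sigma> > 0" and s0: "\<sigma>0 \<ge> 0"
    and P: "psd (\<sigma>^2 *\<^sub>R mat 1 - \<sigma>0^2 *\<^sub>R (A ** transpose A))"
  shows "conv (gauss 0 (\<sigma>^2 *\<^sub>R mat 1 - \<sigma>0^2 *\<^sub>R matrix_inv (transpose (matrix_inv A) ** matrix_inv A)))
   (scale_measure (ennreal (sqrt (det (transpose (matrix_inv A) ** matrix_inv A))))
     (scale_measure (ennreal (1 / \<bar>det (matrix_inv A)\<bar>))
        (distr (conv (gauss 0 (\<sigma>0^2 *\<^sub>R mat 1)) (dirac u)) borel (\<lambda>y. matrix_inv (matrix_inv A) *v (y - - (matrix_inv A *v b))))))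
  = density lborel (gd \<sigma> (A *v u + b))"
proof -
  let ?Ai = "inv2 A"
  have mA: "matrix_inv A = ?Ai" by (rule matrix_inv_2[OF dA])
  have dAi: "det ?Ai \<noteq> 0" using det_inv2[OF dA] dA by simp
  have mAi: "matrix_inv ?Ai = A" by (rule matrix_inv_unique2[OF dAi inv2_left[OF dA]])
  have mAA: "matrix_inv (transpose ?Ai ** ?Ai) = A ** transpose A"
  proof (rule matrix_inv_unique2)
    show "det (transpose ?Ai ** ?Ai) \<noteq> 0" using dAi by (simp add: det_mul det_transpose)
    have "(transpose ?Ai ** ?Ai) ** (A ** transpose A) = transpose ?Ai ** (?Ai ** A) ** transpose A"
      by (simp add: matrix_mul_assoc)
    also have "\<dots> = transpose (A ** ?Ai)"
      by (simp add: inv2_left[OF dA] matrix_mul_rid matrix_transpose_mul)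
    also have "\<dots> = mat 1" by (simp add: inv2_right[OF dA])
    finally show "(transpose ?Ai ** ?Ai) ** (A ** transpose A) = mat 1" .
  qed
  have sq: "sqrt (det (transpose ?Ai ** ?Ai)) = \<bar>det ?Ai\<bar>"
    by (simp add: det_mul det_transpose real_sqrt_mult)
  have sc: "ennreal \<bar>det ?Ai\<bar> * ennreal (1 / \<bar>det ?Ai\<bar>) = 1"
    using dAi by (simp add: ennreal_mult[symmetric])
  let ?L0 = "SOME L::mat2. L ** transpose L = \<sigma>0^2 *\<^sub>R mat 1"
  have L0: "?L0 ** transpose ?L0 = \<sigma>0^2 *\<^sub>R mat 1" by (rule gauss_sqrt[OF psd_scaled_id]) simp
  let ?Mc = "\<sigma>^2 *\<^sub>R mat 1 - \<sigma>0^2 *\<^sub>R (A ** transpose A)"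
  let ?L1 = "SOME L::mat2. L ** transpose L = ?Mc"
  have L1: "?L1 ** transpose ?L1 = ?Mc" by (rule gauss_sqrt[OF P])
  let ?p = "A *v u + b"
  have inner: "distr (conv (gauss 0 (\<sigma>0^2 *\<^sub>R mat 1)) (dirac u)) borel (\<lambda>y. A *v (y - - (?Ai *v b)))
     = distr std_gauss borel (\<lambda>x. ?p + (A ** ?L0) *v x)"
  proof -
    have "distr (conv (gauss 0 (\<sigma>0^2 *\<^sub>R mat 1)) (dirac u)) borel (\<lambda>y. A *v (y - - (?Ai *v b)))
        = distr std_gauss borel (\<lambda>x. A *v ((0 + u) + ?L0 *v x - - (?Ai *v b)))"
      unfolding gauss0 conv_dirac_std by (rule distr_std_comp) measurable
    also have "(\<lambda>x. A *v ((0 + u) + ?L0 *v x - - (?Ai *v b))) = (\<lambda>x. ?p + (A ** ?L0) *v x)"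
      using inv2_right[OF dA]
      by (simp add: matrix_vector_right_distrib matrix_vector_mul_assoc algebra_simps)
    finally show ?thesis .
  qed
  have LHS: "conv (gauss 0 (\<sigma>^2 *\<^sub>R mat 1 - \<sigma>0^2 *\<^sub>R matrix_inv (transpose (matrix_inv A) ** matrix_inv A)))
   (scale_measure (ennreal (sqrt (det (transpose (matrix_inv A) ** matrix_inv A))))
     (scale_measure (ennreal (1 / \<bar>det (matrix_inv A)\<bar>))
        (distr (conv (gauss 0 (\<sigma>0^2 *\<^sub>R mat 1)) (dirac u)) borel (\<lambda>y. matrix_inv (matrix_inv A) *v (y - - (matrix_inv A *v b))))))
    = conv (distr std_gauss borel (\<lambda>x. 0 + ?L1 *v x)) (distr std_gauss borel (\<lambda>x. ?p + (A ** ?L0) *v x))"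
    unfolding mA mAi mAA sq scale_scale_measure sc scale_measure_1 unfolding inner unfolding gauss0 ..
  have C: "?L1 ** transpose ?L1 + (A ** ?L0) ** transpose (A ** ?L0) = \<sigma>^2 *\<^sub>R mat 1"
    unfolding L1 scale_id_LLt[OF L0] by simp
  show ?thesis
  proof (cases "\<sigma>0 = 0")
    case False
    then have s0p: "\<sigma>0 > 0" using s0 by simp
    have "det ?L0 \<noteq> 0" by (rule iso_density(1)[OF L0 s0p])
    then have "det (A ** ?L0) \<noteq> 0" using dA by (simp add: det_mul)
    then show ?thesis unfolding LHS using conv_gauss[OF C s, of 0 ?p] by simp
  next
    case True
    have "?L0 = 0"
    proof -
      have e: "(?L0$1$1)^2 + (?L0$1$2)^2 = 0" "(?L0$2$1)^2 + (?L0$2$2)^2 = 0"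
        using arg_cong[OF L0, of "\<lambda>X. X$1$1"] arg_cong[OF L0, of "\<lambda>X. X$2$2"] True
        by (simp_all add: mm_ij tr_ij power2_eq_square)
      then show ?thesis by (simp add: mat2_eq_iff sum_power2_eq_zero_iff)
    qed
    then have z: "A ** ?L0 = 0" by (simp add: mzero_r)
    have L1': "?L1 ** transpose ?L1 = \<sigma>^2 *\<^sub>R mat 1" using L1 True by simp
    have "distr std_gauss borel (\<lambda>x. ?p + (A ** ?L0) *v x) = dirac ?p"
      unfolding z dirac_def using prob_space.distr_const[OF prob_space_std, of ?p borel] by simp
    then show ?thesis unfolding LHS using conv_dirac_std[of 0 ?L1 ?p] distr_std_iso[OF L1' s] by simp
  qed
qed

lemma dens_density:
  assumes [measurable]: "f \<in> borel_measurable borel" and nn: "\<And>x. f x \<ge> 0"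
  shows "AE x in lborel. dens (density lborel (\<lambda>x. ennreal (f x))) x = f x"
proof -
  have "AE x in lborel. ennreal (f x) = RN_deriv lborel (density lborel (\<lambda>x. ennreal (f x))) x"
    by (rule sigma_finite_measure.RN_deriv_unique[OF sigma_finite_lborel]) auto
  then show ?thesis
    by eventually_elim (metis dens_def enn2real_ennreal nn)
qed

lemma meas_dens[measurable]: "dens \<mu> \<in> borel_measurable borel"
proof -
  have "RN_deriv lborel \<mu> \<in> borel_measurable lborel" by (rule borel_measurable_RN_deriv)
  then have [measurable]: "RN_deriv lborel \<mu> \<in> borel_measurable borel" by simp
  show ?thesis unfolding dens_def[abs_def] by measurable
qed

lemma gd_shift: "gd \<sigma> p (p + \<sigma> *\<^sub>R x) = phi x / \<sigma>^2" if "\<sigma> > 0"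
proof -
  have "(norm (\<sigma> *\<^sub>R x))^2 / (2 * \<sigma>^2) = (norm x)^2 / 2" using that by (simp add: power_mult_distrib)
  then show ?thesis unfolding gd_def phi_def by simp
qed

lemma gd_shift2: "gd \<sigma> q (p + \<sigma> *\<^sub>R x) = phi ((1/\<sigma>) *\<^sub>R (q - p) - x) / \<sigma>^2" if "\<sigma> > 0"
proof -
  have "p + \<sigma> *\<^sub>R x - q = \<sigma> *\<^sub>R (x - (1/\<sigma>) *\<^sub>R (q - p))" using that by (simp add: algebra_simps)
  then have "(norm (p + \<sigma> *\<^sub>R x - q))^2 / (2 * \<sigma>^2) = (norm ((1/\<sigma>) *\<^sub>R (q - p) - x))^2 / 2"
    using that by (simp add: power_mult_distrib norm_minus_commute)
  then show ?thesis unfolding gd_def phi_def by simp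
qed

lemma int_gd_prod:
  assumes s: "\<sigma> > 0"
  shows "(\<integral>\<^sup>+x. ennreal (gd \<sigma> p x * gd \<sigma> q x) \<partial>lborel) = ennreal (exp (- ((norm (p - q))^2) / (4 * \<sigma>^2)) / (4 * pi * \<sigma>^2))"
proof -
  let ?L = "\<sigma> *\<^sub>R (mat 1 :: mat2)"
  let ?a = "(1/\<sigma>) *\<^sub>R (q - p)"
  have dL: "det ?L = \<sigma>^2" by (simp add: det_scaled_id)
  have Lx: "?L *v x = \<sigma> *\<^sub>R x" for x by (simp add: vec2_eq_iff mv_1 mv_2 mat1_ij)
  have "(\<integral>\<^sup>+x. ennreal (gd \<sigma> p x * gd \<sigma> q x) \<partial>lborel) = ennreal \<bar>det ?L\<bar> * (\<integral>\<^sup>+x. ennreal (gd \<sigma> p (p + ?L *v x) * gd \<sigma> q (p + ?L *v x)) \<partial>lborel)"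
    using s by (intro nn_integral_linear_pt) (auto simp: dL)
  also have "\<dots> = ennreal (\<sigma>^2) * (\<integral>\<^sup>+x. ennreal (phi (?a - mat 1 *v x) * phi x) * ennreal (1 / \<sigma>^4) \<partial>lborel)"
  proof -
    have ex: "gd \<sigma> p (p + ?L *v x) * gd \<sigma> q (p + ?L *v x) = phi (?a - mat 1 *v x) * phi x * (1 / \<sigma>^4)" for x
      unfolding Lx gd_shift[OF s] gd_shift2[OF s] by (simp add: field_simps power4_eq_xxxx power2_eq_square)
    have eq: "ennreal (gd \<sigma> p (p + ?L *v x) * gd \<sigma> q (p + ?L *v x)) = ennreal (phi (?a - mat 1 *v x) * phi x) * ennreal (1 / \<sigma>^4)" for x
      unfolding ex using phi_pos[of x] phi_pos[of "?a - mat 1 *v x"] by (intro ennreal_mult) auto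
    have "(\<integral>\<^sup>+x. ennreal (gd \<sigma> p (p + ?L *v x) * gd \<sigma> q (p + ?L *v x)) \<partial>lborel) = (\<integral>\<^sup>+x. ennreal (phi (?a - mat 1 *v x) * phi x) * ennreal (1 / \<sigma>^4) \<partial>lborel)"
      by (rule nn_integral_cong) (rule eq)
    then show ?thesis by (simp only: dL abs_power2)
  qed
  also have "\<dots> = ennreal (\<sigma>^2) * ((\<integral>\<^sup>+x. ennreal (phi (?a - mat 1 *v x) * phi x) \<partial>lborel) * ennreal (1 / \<sigma>^4))"
    by (simp add: nn_integral_multc)
  also have "(\<integral>\<^sup>+x. ennreal (phi (?a - mat 1 *v x) * phi x) \<partial>lborel) = ennreal (exp (- ((norm ?a)^2) / 4) / (4*pi))"
  proof -
    have M: "mat 1 + mat 1 ** transpose (mat 1) = 2 *\<^sub>R (mat 1 :: mat2)" by (simp add: mat2_eq_iff mat1_ij mm_ij tr_ij)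
    have "qf (2 *\<^sub>R mat 1) ?a = 2 * (norm ?a)^2" unfolding qf_def norm_sq_pt by (simp add: mat1_ij)
    then show ?thesis unfolding conv_phi' M det_scaled_id by (simp add: field_simps)
  qed
  also have "ennreal (\<sigma>^2) * (ennreal (exp (- ((norm ?a)^2) / 4) / (4*pi)) * ennreal (1 / \<sigma>^4))
       = ennreal (exp (- ((norm (p - q))^2) / (4 * \<sigma>^2)) / (4 * pi * \<sigma>^2))"
  proof -
    have na: "(norm ?a)^2 = (norm (p - q))^2 / \<sigma>^2" using s by (simp add: power_divide norm_minus_commute)
    have "\<sigma>^2 * (exp (- ((norm ?a)^2) / 4) / (4*pi) * (1 / \<sigma>^4)) = exp (- ((norm (p - q))^2) / (4 * \<sigma>^2)) / (4 * pi * \<sigma>^2)"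
      unfolding na using s by (simp add: field_simps power4_eq_xxxx power2_eq_square)
    then show ?thesis by (simp add: ennreal_mult[symmetric])
  qed
  finally show ?thesis .
qed

lemma int_gd_prod_L:
  assumes s: "\<sigma> > 0"
  shows "integrable lborel (\<lambda>x. gd \<sigma> p x * gd \<sigma> q x)"
    and "(\<integral>x. gd \<sigma> p x * gd \<sigma> q x \<partial>lborel) = exp (- ((norm (p - q))^2) / (4 * \<sigma>^2)) / (4 * pi * \<sigma>^2)"
  using nn_integral_eq_integrable[THEN iffD1, OF _ _ _ int_gd_prod[OF s, of p q]]
  by (auto simp: gd_nonneg)

lemma l2_gd:
  assumes s: "\<sigma> > 0"
  shows "(\<integral>x. (gd \<sigma> p x - gd \<sigma> q x)^2 \<partial>lborel) = (1 - exp (- ((norm (p - q))^2) / (4 * \<sigma>^2))) / (2 * pi * \<sigma>^2)"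
proof -
  have e: "(gd \<sigma> p x - gd \<sigma> q x)^2 = gd \<sigma> p x * gd \<sigma> p x - 2 * (gd \<sigma> p x * gd \<sigma> q x) + gd \<sigma> q x * gd \<sigma> q x" for x
    by (simp add: power2_eq_square algebra_simps)
  note I = int_gd_prod_L[OF s]
  have "(\<integral>x. (gd \<sigma> p x - gd \<sigma> q x)^2 \<partial>lborel) = (\<integral>x. gd \<sigma> p x * gd \<sigma> p x \<partial>lborel) - 2 * (\<integral>x. gd \<sigma> p x * gd \<sigma> q x \<partial>lborel) + (\<integral>x. gd \<sigma> q x * gd \<sigma> q x \<partial>lborel)"
    unfolding e using I(1) by (simp add: integral_add integral_diff)
  also have "\<dots> = (1 - exp (- ((norm (p - q))^2) / (4 * \<sigma>^2))) / (2 * pi * \<sigma>^2)"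
    unfolding I(2) using s by (simp add: field_simps)
  finally show ?thesis .
qed

lemma l2_term:
  assumes s: "\<sigma> > 0"
  shows "(\<integral>x. (dens (density lborel (gd \<sigma> p)) x - dens (density lborel (gd \<sigma> q)) x)^2 \<partial>lborel)
      = (1 - exp (- ((norm (p - q))^2) / (4 * \<sigma>^2))) / (2 * pi * \<sigma>^2)"
proof -
  have "AE x in lborel. (dens (density lborel (gd \<sigma> p)) x - dens (density lborel (gd \<sigma> q)) x)^2 = (gd \<sigma> p x - gd \<sigma> q x)^2"
    using dens_density[OF meas_gd gd_nonneg, of \<sigma> p] dens_density[OF meas_gd gd_nonneg, of \<sigma> q] by eventually_elim simp
  then show ?thesis by (subst integral_cong_AE[where g="\<lambda>x. (gd \<sigma> p x - gd \<sigma> q x)^2"]) (auto simp: l2_gd[OF s])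
qed

definition Fcl :: "nat \<Rightarrow> (nat \<Rightarrow> pt) \<Rightarrow> (nat \<Rightarrow> pt) \<Rightarrow> real \<Rightarrow> mat2 \<Rightarrow> pt \<Rightarrow> real" where
  "Fcl c u v \<sigma> A b = 1 / (2 * real c) * (\<Sum>i=1..c. (1 - exp (- ((norm (A *v u i + b - v i))^2) / (4 * \<sigma>^2))) / (2 * pi * \<sigma>^2))"

lemma phi_inv_closed:
  assumes dA: "det A \<noteq> 0" and s: "\<sigma> > 0" and s0: "\<sigma>0 \<ge> 0"
    and P: "psd (\<sigma>^2 *\<^sub>R mat 1 - \<sigma>0^2 *\<^sub>R (A ** transpose A))"
  shows "phi_inv c u v \<sigma> \<sigma>0 A b = Fcl c u v \<sigma> A b"
  unfolding phi_inv_def phi_L2_def l2_dist_sq_def conv_sig_def scale_sig_def comp_tau_def dirac_sig_def Fcl_def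
  unfolding chan1[OF dA s s0 P] chan2[OF s] l2_term[OF s] ..

definition outer :: "pt \<Rightarrow> pt \<Rightarrow> mat2" where
  "outer r u = (\<chi> i j. r$i * u$j)"

lemma outer_ij: "outer r u $ i $ j = r$i * u$j" by (simp add: outer_def)

lemma inner_mv_outer: "r \<bullet> (H *v u) = H \<bullet> outer r u"
  by (simp add: inner_vec_def sum_2 mv_1 mv_2 outer_ij algebra_simps)

lemma gderiv_unique:
  assumes "GDERIV f x :> D"
  shows "(SOME G. GDERIV f x :> G) = D"
proof -
  define G where "G = (SOME G. GDERIV f x :> G)"
  have "GDERIV f x :> G" unfolding G_def using assms by (rule someI)
  then have "(\<lambda>h. h \<bullet> G) = (\<lambda>h. h \<bullet> D)" using assms unfolding gderiv_def by (rule has_derivative_unique)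
  then have "(G - D) \<bullet> G = (G - D) \<bullet> D" by metis
  then have "(G - D) \<bullet> (G - D) = 0" by (simp add: inner_diff_right)
  then show ?thesis unfolding G_def[symmetric] by simp
qed

lemma term_deriv:
  fixes g :: "'a::real_normed_vector \<Rightarrow> pt"
  assumes g: "(g has_derivative g') (at x)" and s: "\<sigma> > 0"
  shows "((\<lambda>x. (1 - exp (- ((norm (g x))^2) / (4 * \<sigma>^2))) / (2 * pi * \<sigma>^2)) has_derivative
          (\<lambda>h. exp (- ((norm (g x))^2) / (4 * \<sigma>^2)) / (4 * pi * \<sigma>^4) * (g x \<bullet> g' h))) (at x)"
proof -
  define \<phi> where "\<phi> t = (1 - exp (- t / (4 * \<sigma>^2))) / (2 * pi * \<sigma>^2)" for t
  have d\<phi>: "(\<phi> has_real_derivative exp (- t / (4 * \<sigma>^2)) / (8 * pi * \<sigma>^4)) (at t)" for t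
    unfolding \<phi>_def
    using s by (auto intro!: derivative_eq_intros simp: field_simps power4_eq_xxxx power2_eq_square)
  have t: "((\<lambda>x. g x \<bullet> g x) has_derivative (\<lambda>h. g x \<bullet> g' h + g' h \<bullet> g x)) (at x)"
    by (rule has_derivative_inner[OF g g])
  have c: "((\<lambda>x. \<phi> (g x \<bullet> g x)) has_derivative (\<lambda>h. (g x \<bullet> g' h + g' h \<bullet> g x) * (exp (- (g x \<bullet> g x) / (4 * \<sigma>^2)) / (8 * pi * \<sigma>^4)))) (at x)"
    by (rule has_derivative_eq_rhs[OF has_derivative_compose[OF t d\<phi>[unfolded has_field_derivative_def]]]) (simp add: mult.commute)
  have e: "(norm (g y))^2 = g y \<bullet> g y" for y by (simp add: power2_norm_eq_inner)
  show ?thesis unfolding e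
    apply (rule has_derivative_eq_rhs[OF c[unfolded \<phi>_def]])
    using s by (auto intro!: ext simp: inner_commute field_simps power4_eq_xxxx power2_eq_square)
qed

lemma linear_mv_left: "bounded_linear (\<lambda>A::mat2. A *v u)"
proof -
  have "linear (\<lambda>A::mat2. A *v u)"
    by (rule linearI) (simp_all add: matrix_vector_mult_add_rdistrib vec2_eq_iff mv_1 mv_2 algebra_simps)
  then show ?thesis by (simp add: linear_conv_bounded_linear)
qed

definition gradb_cl :: "nat \<Rightarrow> (nat \<Rightarrow> pt) \<Rightarrow> (nat \<Rightarrow> pt) \<Rightarrow> real \<Rightarrow> mat2 \<Rightarrow> pt \<Rightarrow> pt" where
  "gradb_cl c u v \<sigma> A b = (1 / (8 * pi * \<sigma>^4 * real c)) *\<^sub>R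
     (\<Sum>i=1..c. exp (- ((norm (A *v u i + b - v i))^2) / (4 * \<sigma>^2)) *\<^sub>R (A *v u i + b - v i))"

definition gradA_cl :: "nat \<Rightarrow> (nat \<Rightarrow> pt) \<Rightarrow> (nat \<Rightarrow> pt) \<Rightarrow> real \<Rightarrow> mat2 \<Rightarrow> pt \<Rightarrow> mat2" where
  "gradA_cl c u v \<sigma> A b = (1 / (8 * pi * \<sigma>^4 * real c)) *\<^sub>R
     (\<Sum>i=1..c. exp (- ((norm (A *v u i + b - v i))^2) / (4 * \<sigma>^2)) *\<^sub>R outer (A *v u i + b - v i) (u i))"

lemma Fcl_gderiv_b:
  assumes s: "\<sigma> > 0" and c: "c > 0"
  shows "GDERIV (\<lambda>b. Fcl c u v \<sigma> A b) b :> gradb_cl c u v \<sigma> A b"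
proof -
  have t: "((\<lambda>b. (1 - exp (- ((norm (A *v u i + b - v i))^2) / (4 * \<sigma>^2))) / (2 * pi * \<sigma>^2)) has_derivative
          (\<lambda>h. exp (- ((norm (A *v u i + b - v i))^2) / (4 * \<sigma>^2)) / (4 * pi * \<sigma>^4) * ((A *v u i + b - v i) \<bullet> h))) (at b)" for i
  proof -
    have g: "((\<lambda>b. A *v u i + b - v i) has_derivative (\<lambda>h. h)) (at b)"
      by (rule has_derivative_eq_rhs[OF has_derivative_diff[OF has_derivative_add[OF has_derivative_const has_derivative_ident] has_derivative_const]]) simp
    from term_deriv[OF g s] show ?thesis .
  qed
  have "((\<lambda>b. Fcl c u v \<sigma> A b) has_derivative (\<lambda>h. 1 / (2 * real c) *
      (\<Sum>i=1..c. exp (- ((norm (A *v u i + b - v i))^2) / (4 * \<sigma>^2)) / (4 * pi * \<sigma>^4) * ((A *v u i + b - v i) \<bullet> h)))) (at b)"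
    unfolding Fcl_def by (intro has_derivative_mult_right has_derivative_sum t)
  moreover have "(\<lambda>h. 1 / (2 * real c) *
      (\<Sum>i=1..c. exp (- ((norm (A *v u i + b - v i))^2) / (4 * \<sigma>^2)) / (4 * pi * \<sigma>^4) * ((A *v u i + b - v i) \<bullet> h)))
     = (\<lambda>h. h \<bullet> gradb_cl c u v \<sigma> A b)"
  proof (rule ext)
    fix h
    have "h \<bullet> gradb_cl c u v \<sigma> A b = (\<Sum>i=1..c. 1 / (8 * pi * \<sigma>^4 * real c) * (exp (- ((norm (A *v u i + b - v i))^2) / (4 * \<sigma>^2)) * (h \<bullet> (A *v u i + b - v i))))"
      by (simp add: gradb_cl_def inner_sum_right sum_distrib_left)
    also have "\<dots> = 1 / (2 * real c) * (\<Sum>i=1..c. exp (- ((norm (A *v u i + b - v i))^2) / (4 * \<sigma>^2)) / (4 * pi * \<sigma>^4) * ((A *v u i + b - v i) \<bullet> h))"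
      unfolding sum_distrib_left using c by (intro sum.cong refl) (simp add: inner_commute field_simps)
    finally show "1 / (2 * real c) * (\<Sum>i=1..c. exp (- ((norm (A *v u i + b - v i))^2) / (4 * \<sigma>^2)) / (4 * pi * \<sigma>^4) * ((A *v u i + b - v i) \<bullet> h)) = h \<bullet> gradb_cl c u v \<sigma> A b" by simp
  qed
  ultimately show ?thesis unfolding gderiv_def by simp
qed

lemma Fcl_gderiv_A:
  assumes s: "\<sigma> > 0" and c: "c > 0"
  shows "GDERIV (\<lambda>A. Fcl c u v \<sigma> A b) A :> gradA_cl c u v \<sigma> A b"
proof -
  have t: "((\<lambda>A. (1 - exp (- ((norm (A *v u i + b - v i))^2) / (4 * \<sigma>^2))) / (2 * pi * \<sigma>^2)) has_derivative
          (\<lambda>h. exp (- ((norm (A *v u i + b - v i))^2) / (4 * \<sigma>^2)) / (4 * pi * \<sigma>^4) * ((A *v u i + b - v i) \<bullet> (h *v u i)))) (at A)" for i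
  proof -
    have "((\<lambda>A::mat2. A *v u i + b - v i) has_derivative (\<lambda>h. h *v u i)) (at A)"
      by (rule has_derivative_eq_rhs[OF has_derivative_diff[OF has_derivative_add[OF bounded_linear.has_derivative[OF linear_mv_left has_derivative_ident] has_derivative_const] has_derivative_const]]) simp
    from term_deriv[OF this s] show ?thesis .
  qed
  have "((\<lambda>A. Fcl c u v \<sigma> A b) has_derivative (\<lambda>h. 1 / (2 * real c) *
      (\<Sum>i=1..c. exp (- ((norm (A *v u i + b - v i))^2) / (4 * \<sigma>^2)) / (4 * pi * \<sigma>^4) * ((A *v u i + b - v i) \<bullet> (h *v u i))))) (at A)"
    unfolding Fcl_def by (intro has_derivative_mult_right has_derivative_sum t)
  moreover have "(\<lambda>h. 1 / (2 * real c) *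
      (\<Sum>i=1..c. exp (- ((norm (A *v u i + b - v i))^2) / (4 * \<sigma>^2)) / (4 * pi * \<sigma>^4) * ((A *v u i + b - v i) \<bullet> (h *v u i))))
     = (\<lambda>h. h \<bullet> gradA_cl c u v \<sigma> A b)"
  proof (rule ext)
    fix h
    have "h \<bullet> gradA_cl c u v \<sigma> A b = (\<Sum>i=1..c. 1 / (8 * pi * \<sigma>^4 * real c) * (exp (- ((norm (A *v u i + b - v i))^2) / (4 * \<sigma>^2)) * (h \<bullet> outer (A *v u i + b - v i) (u i))))"
      by (simp add: gradA_cl_def inner_sum_right sum_distrib_left)
    also have "\<dots> = 1 / (2 * real c) * (\<Sum>i=1..c. exp (- ((norm (A *v u i + b - v i))^2) / (4 * \<sigma>^2)) / (4 * pi * \<sigma>^4) * ((A *v u i + b - v i) \<bullet> (h *v u i)))"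
      unfolding sum_distrib_left inner_mv_outer using c by (intro sum.cong refl) (simp add: field_simps)
    finally show "1 / (2 * real c) * (\<Sum>i=1..c. exp (- ((norm (A *v u i + b - v i))^2) / (4 * \<sigma>^2)) / (4 * pi * \<sigma>^4) * ((A *v u i + b - v i) \<bullet> (h *v u i))) = h \<bullet> gradA_cl c u v \<sigma> A b" by simp
  qed
  ultimately show ?thesis unfolding gderiv_def by simp
qed

lemma cs_gen:
  fixes T :: "'z::real_vector \<Rightarrow> 'z \<Rightarrow> real"
  assumes sym: "\<And>x y. T x y = T y x"
    and quad: "\<And>x y t. T (x + t *\<^sub>R y) (x + t *\<^sub>R y) = T x x + 2 * t * T x y + t^2 * T y y"
    and pos: "\<And>x. T x x \<ge> 0"
  shows "(T x y)^2 \<le> T x x * T y y"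
proof (cases "T y y = 0")
  case True
  have "T x y = 0"
  proof (rule ccontr)
    assume ne: "T x y \<noteq> 0"
    define t where "t = - (T x x + 1) / (2 * T x y)"
    have "0 \<le> T (x + t *\<^sub>R y) (x + t *\<^sub>R y)" by (rule pos)
    also have "\<dots> = T x x + 2 * t * T x y" using quad True by simp
    also have "\<dots> = -1" using ne by (simp add: t_def field_simps)
    finally show False by simp
  qed
  then show ?thesis using True by simp
next
  case False
  then have p: "T y y > 0" using pos[of y] by simp
  define t where "t = - T x y / T y y"
  have "0 \<le> T (x + t *\<^sub>R y) (x + t *\<^sub>R y)" by (rule pos)
  also have "\<dots> = T x x + 2 * t * T x y + t^2 * T y y" by (rule quad)
  also have "\<dots> = T x x - (T x y)^2 / T y y" using p by (simp add: t_def field_simps power2_eq_square)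
  finally show ?thesis using p by (simp add: field_simps)
qed

lemma mv_sum: "(A::mat2) *v (\<Sum>i\<in>I. f i) = (\<Sum>i\<in>I. A *v f i)"
  by (rule linear_sum[OF matrix_vector_mul_linear])

lemma mv_row: "((A::mat2) *v x) $ j = A$j \<bullet> x"
  by (simp add: matrix_vector_mult_def inner_vec_def mult.commute)

lemma inner_mat: "(A::mat2) \<bullet> B = A$1 \<bullet> B$1 + A$2 \<bullet> B$2"
  by (simp add: inner_vec_def sum_2)

lemma inner_pt: "(x::pt) \<bullet> y = x$1 * y$1 + x$2 * y$2"
  by (simp add: inner_vec_def sum_2)

lemma scaleR_mv: "(t *\<^sub>R (A::mat2)) *v x = t *\<^sub>R (A *v x)"
  by (simp add: vec2_eq_iff mv_1 mv_2 algebra_simps)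

lemma sum_mv_sq:
  assumes R: "\<And>a. lam * (a \<bullet> a) \<le> (\<Sum>i\<in>I. (a \<bullet> u i)^2) \<and> (\<Sum>i\<in>I. (a \<bullet> u i)^2) \<le> mu * (a \<bullet> a)"
  shows "lam * (D \<bullet> D) \<le> (\<Sum>i\<in>I. (D *v u i) \<bullet> (D *v u i)) \<and> (\<Sum>i\<in>I. (D *v u i) \<bullet> (D *v u i)) \<le> mu * ((D::mat2) \<bullet> D)"
proof -
  have e: "(\<Sum>i\<in>I. (D *v u i) \<bullet> (D *v u i)) = (\<Sum>i\<in>I. (D$1 \<bullet> u i)^2) + (\<Sum>i\<in>I. (D$2 \<bullet> u i)^2)"
    by (simp add: inner_pt mv_row sum.distrib power2_eq_square)
  show ?thesis unfolding e inner_mat using R[of "D$1"] R[of "D$2"] by (simp add: algebra_simps)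
qed

lemma sum_r_sq:
  fixes D :: mat2 and d :: pt
  assumes c: "finite I" and cen: "(\<Sum>i\<in>I. u i) = 0"
  shows "(\<Sum>i\<in>I. (D *v u i + d) \<bullet> (D *v u i + d)) = (\<Sum>i\<in>I. (D *v u i) \<bullet> (D *v u i)) + real (card I) * (d \<bullet> d)"
proof -
  have "(\<Sum>i\<in>I. (D *v u i + d) \<bullet> (D *v u i + d)) = (\<Sum>i\<in>I. (D *v u i) \<bullet> (D *v u i) + 2 * ((D *v u i) \<bullet> d) + d \<bullet> d)"
    by (rule sum.cong) (simp_all add: inner_add inner_commute algebra_simps)
  also have "\<dots> = (\<Sum>i\<in>I. (D *v u i) \<bullet> (D *v u i)) + 2 * ((\<Sum>i\<in>I. D *v u i) \<bullet> d) + (\<Sum>i\<in>I. d \<bullet> d)"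
    by (simp add: sum.distrib inner_sum_left sum_distrib_left)
  also have "(\<Sum>i\<in>I. D *v u i) = 0"
  proof -
    have "(\<Sum>i\<in>I. D *v u i) = D *v (\<Sum>i\<in>I. u i)" by (rule mv_sum[symmetric])
    then show ?thesis using cen by simp
  qed
  finally show ?thesis by simp
qed

lemma div_le:
  fixes X Y q :: real
  assumes a: "0 \<le> X" "0 \<le> Y" "0 \<le> q" "X^2 \<le> q*Y*X" shows "X \<le> q*Y"
proof (cases "X = 0")
  case True
  then show ?thesis using a by simp
next
  case False
  then have "X * X \<le> (q*Y) * X" using a by (simp add: power2_eq_square)
  then show ?thesis using a(1) False by (simp add: mult_le_cancel_right)
qed

lemma key_step:
  fixes D :: mat2 and d :: pt and e :: "nat \<Rightarrow> real" and u :: "nat \<Rightarrow> pt"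
  assumes c: "c > 0" and cen: "(\<Sum>i=1..c. u i) = 0"
    and R: "\<And>a. lam * (a \<bullet> a) \<le> (\<Sum>i=1..c. (a \<bullet> u i)^2) \<and> (\<Sum>i=1..c. (a \<bullet> u i)^2) \<le> mu * (a \<bullet> a)"
    and lm: "0 < lam" "lam \<le> mu"
    and e: "\<And>i. i \<in> {1..c} \<Longrightarrow> 1/2 \<le> e i \<and> e i \<le> 1"
  defines "D' \<equiv> D - (1/mu) *\<^sub>R (\<Sum>i=1..c. e i *\<^sub>R outer (D *v u i + d) (u i))"
    and "d' \<equiv> d - (1/real c) *\<^sub>R (\<Sum>i=1..c. e i *\<^sub>R (D *v u i + d))"
  shows "mu/c * (D' \<bullet> D') + d' \<bullet> d' \<le> (1 - lam/(2*mu))^2 * (mu/c * (D \<bullet> D) + d \<bullet> d)"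
proof -
  define R where "R i z = fst z *v u i + snd z" for i and z :: "mat2 \<times> pt"
  define IP where "IP z w = mu/c * (fst z \<bullet> fst w) + snd z \<bullet> snd w" for z w :: "mat2 \<times> pt"
  define S where "S z w = 1/c * (\<Sum>i=1..c. e i * (R i z \<bullet> R i w))" for z w
  define T where "T z w = IP z w - S z w" for z w
  define m where "m = lam / (2*mu)"
  have mup: "mu > 0" using lm by simp
  have e0: "\<And>i. i \<in> {1..c} \<Longrightarrow> 0 \<le> e i" using e by fastforce
  have cp: "real c > 0" using c by simp
  have Rlin: "R i (x + t *\<^sub>R y) = R i x + t *\<^sub>R R i y" for i x y t
    by (simp add: R_def matrix_vector_mult_add_rdistrib scaleR_mv algebra_simps)
  have Tsym: "T x y = T y x" for x y
    by (simp add: T_def IP_def S_def inner_commute)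
  have Tquad: "T (x + t *\<^sub>R y) (x + t *\<^sub>R y) = T x x + 2 * t * T x y + t^2 * T y y" for x y t
  proof -
    have s: "S (x + t *\<^sub>R y) (x + t *\<^sub>R y) = S x x + 2 * t * S x y + t^2 * S y y"
      unfolding S_def Rlin
      by (simp add: inner_add inner_commute sum.distrib sum_distrib_left algebra_simps power2_eq_square)
    have i: "IP (x + t *\<^sub>R y) (x + t *\<^sub>R y) = IP x x + 2 * t * IP x y + t^2 * IP y y"
      unfolding IP_def by (simp add: inner_add inner_commute algebra_simps power2_eq_square)
    show ?thesis unfolding T_def s i by (simp add: algebra_simps)
  qed
  have sumR: "(\<Sum>i=1..c. R i z \<bullet> R i z) = (\<Sum>i=1..c. (fst z *v u i) \<bullet> (fst z *v u i)) + real c * (snd z \<bullet> snd z)" for z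
    unfolding R_def using sum_r_sq[OF _ cen, of "fst z" "snd z"] by simp
  have Sup: "S z z \<le> IP z z" for z
  proof -
    have "S z z \<le> 1/c * (\<Sum>i=1..c. R i z \<bullet> R i z)"
      unfolding S_def using cp e e0 by (intro mult_left_mono sum_mono) (auto intro!: mult_left_le_one_le)
    also have "\<dots> \<le> IP z z"
      unfolding sumR IP_def using sum_mv_sq[OF R, of "fst z"] cp by (simp add: field_simps)
    finally show ?thesis .
  qed
  have Slo: "m * IP z z \<le> S z z" for z
  proof -
    have "1/c * ((1/2) * (\<Sum>i=1..c. R i z \<bullet> R i z)) \<le> S z z"
      unfolding S_def sum_distrib_left using cp e e0
      by (intro mult_left_mono sum_mono mult_right_mono) auto
    moreover have "m * IP z z \<le> 1/c * ((1/2) * (\<Sum>i=1..c. R i z \<bullet> R i z))"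
    proof -
      have l: "lam * (fst z \<bullet> fst z) \<le> (\<Sum>i=1..c. (fst z *v u i) \<bullet> (fst z *v u i))"
        using sum_mv_sq[OF R, of "fst z"] by simp
      have "m * IP z z = lam/(2*c) * (fst z \<bullet> fst z) + lam/(2*mu) * (snd z \<bullet> snd z)"
        unfolding m_def IP_def using mup cp by (simp add: field_simps)
      also have "\<dots> \<le> lam/(2*c) * (fst z \<bullet> fst z) + 1/2 * (snd z \<bullet> snd z)"
        using lm mup by (intro add_left_mono mult_right_mono) (auto simp: field_simps)
      also have "\<dots> \<le> 1/c * ((1/2) * (\<Sum>i=1..c. R i z \<bullet> R i z))"
        unfolding sumR using l cp by (simp add: field_simps)
      finally show ?thesis .
    qed
    ultimately show ?thesis by linarith
  qed
  have Tpos: "T z z \<ge> 0" for z using Sup[of z] by (simp add: T_def)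
  have Tup: "T z z \<le> (1 - m) * IP z z" for z using Slo[of z] by (simp add: T_def algebra_simps)
  let ?z = "(D, d)" and ?z' = "(D', d')"
  have key: "IP ?z' w = T ?z w" for w
  proof -
    have o: "outer r (u i) \<bullet> W = r \<bullet> (W *v u i)" for r W i by (simp add: inner_mv_outer inner_commute)
    have a: "D' \<bullet> fst w = D \<bullet> fst w - (1/mu) * (\<Sum>i=1..c. e i * ((D *v u i + d) \<bullet> (fst w *v u i)))"
      by (simp add: D'_def inner_diff_left inner_sum_left o)
    have b: "d' \<bullet> snd w = d \<bullet> snd w - (1/c) * (\<Sum>i=1..c. e i * ((D *v u i + d) \<bullet> snd w))"
      by (simp add: d'_def inner_diff_left inner_sum_left)
    have "IP ?z' w = mu/c * (D \<bullet> fst w) + d \<bullet> snd w - 1/c * (\<Sum>i=1..c. e i * ((D *v u i + d) \<bullet> (fst w *v u i)) + e i * ((D *v u i + d) \<bullet> snd w))"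
      unfolding IP_def fst_conv snd_conv a b using mup cp by (simp add: sum.distrib field_simps)
    also have "\<dots> = T ?z w"
      unfolding T_def IP_def S_def R_def by (simp add: inner_add_right algebra_simps)
    finally show ?thesis .
  qed
  have Vz': "IP ?z' ?z' = T ?z ?z'" by (rule key)
  have cs: "(T ?z ?z')^2 \<le> T ?z ?z * T ?z' ?z'" by (rule cs_gen[OF Tsym Tquad Tpos])
  have m1: "0 \<le> 1 - m" using lm mup by (simp add: m_def field_simps)
  have IPpos: "IP z z \<ge> 0" for z unfolding IP_def using mup cp by (simp add: add_nonneg_nonneg)
  have "(IP ?z' ?z')^2 = (T ?z ?z')^2" using Vz' by simp
  also have "\<dots> \<le> T ?z ?z * T ?z' ?z'" by (rule cs)
  also have "\<dots> \<le> ((1 - m) * IP ?z ?z) * ((1 - m) * IP ?z' ?z')"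
    using Tup[of ?z] Tup[of ?z'] Tpos[of ?z] Tpos[of ?z'] by (intro mult_mono) auto
  finally have "(IP ?z' ?z')^2 \<le> ((1 - m) * IP ?z ?z) * ((1 - m) * IP ?z' ?z')" .
  then have "(IP ?z' ?z')^2 \<le> (1 - m)^2 * IP ?z ?z * IP ?z' ?z'" by (simp add: power2_eq_square algebra_simps)
  then have "IP ?z' ?z' \<le> (1 - m)^2 * IP ?z ?z"
    using div_le[OF IPpos[of ?z'] IPpos[of ?z] zero_le_power2] by simp
  then show ?thesis unfolding IP_def m_def by simp
qed

lemma quad_nonneg:
  fixes \<alpha> \<beta> \<gamma> x y :: real
  assumes "\<alpha> \<ge> 0" "\<gamma> \<ge> 0" "\<alpha> * \<gamma> = \<beta>^2"
  shows "0 \<le> \<alpha> * x^2 + 2 * \<beta> * x * y + \<gamma> * y^2"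
proof (cases "\<alpha> = 0")
  case True
  then have "\<beta> = 0" using assms by simp
  then show ?thesis using True assms by simp
next
  case False
  then have ap: "\<alpha> > 0" using assms by simp
  have "\<alpha> * (\<alpha> * x^2 + 2 * \<beta> * x * y + \<gamma> * y^2) = (\<alpha> * x + \<beta> * y)^2"
    using assms(3) by (simp add: power2_eq_square algebra_simps)
  then have "0 \<le> \<alpha> * (\<alpha> * x^2 + 2 * \<beta> * x * y + \<gamma> * y^2)" by simp
  then show ?thesis using ap by (simp add: zero_le_mult_iff)
qed

lemma det_zero_kernel: assumes "det (A::mat2) = 0" shows "\<exists>x. x \<noteq> 0 \<and> A *v x = 0"
proof -
  have "\<not> invertible A" using assms invertible_det_nz by auto
  then have "\<not> (\<forall>x. A *v x = 0 \<longrightarrow> x = 0)"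
    using invertible_left_inverse[of A] matrix_left_invertible_ker[of A] by auto
  then show ?thesis by auto
qed

locale sym2 =
  fixes M :: mat2
  assumes sym: "M$2$1 = M$1$2"
begin

definition "dd = sqrt (((M$1$1 - M$2$2)/2)^2 + (M$1$2)^2)"
definition "lm = (M$1$1 + M$2$2)/2 - dd"
definition "lp = (M$1$1 + M$2$2)/2 + dd"

lemma dd_sq: "dd^2 = ((M$1$1 - M$2$2)/2)^2 + (M$1$2)^2" by (simp add: dd_def)
lemma dd_ge: "\<bar>(M$1$1 - M$2$2)/2\<bar> \<le> dd"
proof -
  have "(\<bar>(M$1$1 - M$2$2)/2\<bar>)^2 = ((M$1$1 - M$2$2)/2)^2" by (rule power2_abs)
  then show ?thesis unfolding dd_def by (intro real_le_rsqrt) simp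
qed

lemma char: "(l - lm) * (l - lp) = (M$1$1 - l) * (M$2$2 - l) - (M$1$2)^2"
proof -
  have "(l - lm) * (l - lp) = (l - (M$1$1 + M$2$2)/2)^2 - dd^2"
    unfolding lm_def lp_def by (simp add: power2_eq_square field_simps)
  also have "\<dots> = (M$1$1 - l) * (M$2$2 - l) - (M$1$2)^2"
    unfolding dd_sq by (simp add: power2_eq_square field_simps)
  finally show ?thesis .
qed

lemma det_shift: "det (M - l *\<^sub>R mat 1) = (M$1$1 - l) * (M$2$2 - l) - (M$1$2)^2"
  by (simp add: det2 mat1_ij sym power2_eq_square)

lemma eigvals_eq: "eigvals M = {lm, lp}"
proof
  show "eigvals M \<subseteq> {lm, lp}"
  proof
    fix l assume "l \<in> eigvals M"
    then obtain x where x: "x \<noteq> 0" "M *v x = l *\<^sub>R x" by (auto simp: eigvals_def)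
    have "(M - l *\<^sub>R mat 1) *v x = 0" using x by (simp add: matrix_vector_mult_diff_rdistrib scaleR_mv)
    then have "det (M - l *\<^sub>R mat 1) = 0"
      using x(1) invertible_det_nz[of "M - l *\<^sub>R mat 1"] invertible_left_inverse matrix_left_invertible_ker by metis
    then have "(l - lm) * (l - lp) = 0" unfolding char det_shift[symmetric] .
    then show "l \<in> {lm, lp}" by auto
  qed
  show "{lm, lp} \<subseteq> eigvals M"
  proof
    fix l assume l: "l \<in> {lm, lp}"
    then have "det (M - l *\<^sub>R mat 1) = 0" unfolding det_shift char[symmetric] by auto
    then obtain x where "x \<noteq> 0" "(M - l *\<^sub>R mat 1) *v x = 0" using det_zero_kernel by blast
    then show "l \<in> eigvals M" unfolding eigvals_def
      by (auto simp: matrix_vector_mult_diff_rdistrib scaleR_mv)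
  qed
qed

lemma dd_nn: "dd \<ge> 0" unfolding dd_def by simp
lemma lm_le_lp: "lm \<le> lp" using dd_nn by (simp add: lm_def lp_def)

lemma Max_eig: "Max (eigvals M) = lp" using lm_le_lp by (simp add: eigvals_eq max_def)
lemma Min_eig: "Min (eigvals M) = lm" using lm_le_lp by (simp add: eigvals_eq min_def)

lemma qform: "a \<bullet> (M *v a) = M$1$1 * (a$1)^2 + 2 * M$1$2 * (a$1) * (a$2) + M$2$2 * (a$2)^2"
  by (simp add: inner_pt mv_1 mv_2 sym power2_eq_square algebra_simps)

lemma rayleigh: "lm * (a \<bullet> a) \<le> a \<bullet> (M *v a) \<and> a \<bullet> (M *v a) \<le> lp * (a \<bullet> a)"
proof
  have g: "- dd \<le> (M$1$1 - M$2$2)/2" "(M$1$1 - M$2$2)/2 \<le> dd" using dd_ge by (auto simp: abs_le_iff)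
  have p1: "(M$1$1 - lm) * (M$2$2 - lm) = (M$1$2)^2" using char[of lm] by simp
  have "0 \<le> (M$1$1 - lm) * (a$1)^2 + 2 * M$1$2 * (a$1) * (a$2) + (M$2$2 - lm) * (a$2)^2"
  proof (rule quad_nonneg[OF _ _ p1])
    have aux1: "\<And>x y d::real. -d \<le> (x - y)/2 \<Longrightarrow> 0 \<le> x - ((x+y)/2 - d)" by (simp add: field_simps)
    have aux2: "\<And>x y d::real. (x - y)/2 \<le> d \<Longrightarrow> 0 \<le> y - ((x+y)/2 - d)" by (simp add: field_simps)
    show "0 \<le> M$1$1 - lm" unfolding lm_def by (rule aux1[OF g(1)])
    show "0 \<le> M$2$2 - lm" unfolding lm_def by (rule aux2[OF g(2)])
  qed
  then show "lm * (a \<bullet> a) \<le> a \<bullet> (M *v a)" unfolding qform by (simp add: inner_pt power2_eq_square algebra_simps)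
  have p2: "(lp - M$1$1) * (lp - M$2$2) = (- M$1$2)^2" using char[of lp] by (simp add: algebra_simps power2_eq_square)
  have "0 \<le> (lp - M$1$1) * (a$1)^2 + 2 * (- M$1$2) * (a$1) * (a$2) + (lp - M$2$2) * (a$2)^2"
  proof (rule quad_nonneg[OF _ _ p2])
    have aux3: "\<And>x y d::real. (x - y)/2 \<le> d \<Longrightarrow> 0 \<le> (x+y)/2 + d - x" by (simp add: field_simps)
    have aux4: "\<And>x y d::real. -d \<le> (x - y)/2 \<Longrightarrow> 0 \<le> (x+y)/2 + d - y" by (simp add: field_simps)
    show "0 \<le> lp - M$1$1" unfolding lp_def by (rule aux3[OF g(2)])
    show "0 \<le> lp - M$2$2" unfolding lp_def by (rule aux4[OF g(1)])
  qed
  then show "a \<bullet> (M *v a) \<le> lp * (a \<bullet> a)" unfolding qform by (simp add: inner_pt power2_eq_square algebra_simps)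
qed

lemma lm_eigvec: "\<exists>x. x \<noteq> 0 \<and> M *v x = lm *\<^sub>R x"
proof -
  have "lm \<in> eigvals M" using eigvals_eq by simp
  then show ?thesis unfolding eigvals_def by simp
qed

end

lemma gram_sym: "gram c u $2$1 = gram c u $1$2"
  by (simp add: gram_def mult.commute)

lemma gram_qform: "a \<bullet> (gram c u *v a) = (\<Sum>i=1..c. (a \<bullet> u i)^2)"
proof -
  have "(\<Sum>i=1..c. (a \<bullet> u i)^2) = (\<Sum>i=1..c. (a$1*a$1)*(u i$1*u i$1) + 2*(a$1*a$2)*(u i$1*u i$2) + (a$2*a$2)*(u i$2*u i$2))"
    by (rule sum.cong) (simp_all add: inner_pt power2_eq_square algebra_simps)
  also have "\<dots> = (a$1*a$1)*(\<Sum>i=1..c. u i$1*u i$1) + 2*(a$1*a$2)*(\<Sum>i=1..c. u i$1*u i$2) + (a$2*a$2)*(\<Sum>i=1..c. u i$2*u i$2)"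
    by (simp add: sum.distrib sum_distrib_left)
  also have "\<dots> = a \<bullet> (gram c u *v a)"
  proof -
    have e: "gram c u $1$1 = (\<Sum>i=1..c. u i$1*u i$1)" "gram c u $1$2 = (\<Sum>i=1..c. u i$1*u i$2)"
      "gram c u $2$1 = (\<Sum>i=1..c. u i$1*u i$2)" "gram c u $2$2 = (\<Sum>i=1..c. u i$2*u i$2)"
      by (simp_all add: gram_def mult.commute)
    have "a \<bullet> (gram c u *v a) = a$1 * (gram c u $1$1 * a$1 + gram c u $1$2 * a$2) + a$2 * (gram c u $2$1 * a$1 + gram c u $2$2 * a$2)"
      by (simp add: inner_pt mv_1 mv_2)
    then show ?thesis unfolding e by (simp add: algebra_simps)
  qed
  finally show ?thesis by simp
qed

lemma rank2_pos:
  fixes u :: "nat \<Rightarrow> pt" and c :: nat and a :: pt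
  assumes r: "dim (span (u ` {1..c})) = 2" and a: "a \<noteq> 0"
  shows "(\<Sum>i=1..c. (a \<bullet> u i)^2) > 0"
proof (rule ccontr)
  assume ng: "\<not> ?thesis"
  have nn: "0 \<le> (\<Sum>i=1..c. (a \<bullet> u i)^2)" by (intro sum_nonneg) simp
  have "(\<Sum>i=1..c. (a \<bullet> u i)^2) = 0" using nn ng by simp
  then have z: "\<forall>i\<in>{1..c}. a \<bullet> u i = 0" by (subst (asm) sum_nonneg_eq_0_iff) auto
  have "u ` {1..c} \<subseteq> {x. a \<bullet> x = 0}" using z by auto
  then have "dim (u ` {1..c}) \<le> dim {x. a \<bullet> x = 0}" by (rule dim_subset)
  also have "\<dots> = 1" using dim_hyperplane[OF a] by simp
  finally have "dim (u ` {1..c}) \<le> 1" .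
  then show False using r by (simp add: dim_span)
qed

lemma frob_sq: "frob_norm M ^ 2 = M \<bullet> M"
proof -
  have "frob_norm M ^ 2 = (\<Sum>i\<in>UNIV. \<Sum>j\<in>UNIV. (M $ i $ j)^2)"
    unfolding frob_norm_def by (simp add: sum_nonneg)
  also have "\<dots> = M \<bullet> M" by (simp add: inner_vec_def power2_eq_square)
  finally show ?thesis .
qed

lemma mv_norm_le: "(D *v x) \<bullet> (D *v x) \<le> ((D::mat2) \<bullet> D) * (x \<bullet> x)"
proof -
  have "(D *v x) \<bullet> (D *v x) = (D$1 \<bullet> x)^2 + (D$2 \<bullet> x)^2" by (simp add: inner_pt mv_row power2_eq_square)
  also have "\<dots> \<le> (D$1 \<bullet> D$1) * (x \<bullet> x) + (D$2 \<bullet> D$2) * (x \<bullet> x)"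
    using Cauchy_Schwarz_ineq[of "D$1" x] Cauchy_Schwarz_ineq[of "D$2" x] by linarith
  also have "\<dots> = (D \<bullet> D) * (x \<bullet> x)" by (simp add: inner_mat algebra_simps)
  finally show ?thesis .
qed

lemma sum_sq_le: "(x + y) \<bullet> (x + y) \<le> 2 * (x \<bullet> x + y \<bullet> (y::pt))"
proof -
  have "0 \<le> (x - y) \<bullet> (x - y)" by simp
  then show ?thesis by (simp add: inner_add inner_diff inner_commute algebra_simps)
qed

lemma exp_half: "(t::real) \<le> 1 \<Longrightarrow> 1/2 \<le> exp (- t / 4)"
proof -
  assume "t \<le> 1"
  then have "1/2 \<le> 1 + (- t / 4)" by simp
  also have "\<dots> \<le> exp (- t / 4)" by (rule exp_ge_add_one_self)
  finally show ?thesis .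
qed

theorem theorem1:
  fixes c :: nat and u v :: "nat \<Rightarrow> pt" and Astar :: mat2 and bstar :: pt
    and \<sigma> \<sigma>0 tA tb \<kappa> :: real and A :: "nat \<Rightarrow> mat2" and b :: "nat \<Rightarrow> pt"
  assumes c2: "c \<ge> 2"
    and Astar_inv: "invertible Astar"
    and v_def: "\<And>i. i \<in> {1..c} \<Longrightarrow> v i = Astar *v u i + bstar"
    and sigma_pos: "\<sigma> > 0" and sigma0_nonneg: "\<sigma>0 \<ge> 0"
    and centered: "(\<Sum>i=1..c. u i) = 0"
    and rank2: "dim (span (u ` {1..c})) = 2"
    and kappa_def: "\<kappa> = s_max c u ^ 2 / s_min c u ^ 2"
    and sigma_large: "\<sigma>^2 \<ge> 2 * Max ((\<lambda>i. (norm (u i))^2) ` {1..c}) / s_min c u ^ 2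
                         * (s_max c u ^ 2 * frob_norm (Astar - mat 1) ^ 2 + real c * (norm bstar)^2)"
    and tA_def: "tA = 8 * pi * real c * \<sigma>^4 / s_max c u ^ 2"
    and tb_def: "tb = 8 * pi * \<sigma>^4"
    and A0: "A 0 = mat 1" and b0: "b 0 = 0"
    and A_step: "\<And>k. A (Suc k) = A k - tA *\<^sub>R grad_A (phi_inv c u v \<sigma> \<sigma>0) (A k) (b k)"
    and b_step: "\<And>k. b (Suc k) = b k - tb *\<^sub>R grad_b (phi_inv c u v \<sigma> \<sigma>0) (A k) (b k)"
    and well_defined: "\<And>k. \<exists>N. open N \<and> A k \<in> N \<and>
                 (\<forall>A'\<in>N. invertible A' \<and> psd (\<sigma>^2 *\<^sub>R mat 1 - \<sigma>0^2 *\<^sub>R (A' ** transpose A')))"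
  shows "8 * pi * \<sigma>^4 / tA * frob_norm (A k - Astar)^2 + (norm (b k - bstar))^2
           \<le> (1 - 1 / (2 * \<kappa>)) ^ (2 * k)
              * (8 * pi * \<sigma>^4 / tA * frob_norm (mat 1 - Astar)^2 + (norm bstar)^2)"
proof -
  have c0: "c > 0" using c2 by simp
  have cp: "real c > 0" using c0 by simp
  interpret G: sym2 "gram c u" by unfold_locales (rule gram_sym)
  define lam where "lam = G.lm"
  define mu where "mu = G.lp"
  have R: "\<And>a. lam * (a \<bullet> a) \<le> (\<Sum>i=1..c. (a \<bullet> u i)^2) \<and> (\<Sum>i=1..c. (a \<bullet> u i)^2) \<le> mu * (a \<bullet> a)"
    using G.rayleigh unfolding lam_def mu_def gram_qform by blast
  have lampos: "lam > 0"
  proof -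
    obtain x where x: "x \<noteq> 0" "gram c u *v x = G.lm *\<^sub>R x" using G.lm_eigvec by blast
    have "0 < (\<Sum>i=1..c. (x \<bullet> u i)^2)" by (rule rank2_pos[OF rank2 x(1)])
    also have "\<dots> = lam * (x \<bullet> x)" unfolding gram_qform[symmetric] x(2) lam_def by simp
    finally have "0 < lam * (x \<bullet> x)" .
    moreover have "x \<bullet> x > 0" using x(1) by simp
    ultimately show ?thesis by (simp add: zero_less_mult_iff)
  qed
  have lm_mu: "lam \<le> mu" unfolding lam_def mu_def by (rule G.lm_le_lp)
  have mupos: "mu > 0" using lampos lm_mu by simp
  have smin: "s_min c u ^ 2 = lam" unfolding s_min_def G.Min_eig lam_def[symmetric] using lampos by simp
  have smax: "s_max c u ^ 2 = mu" unfolding s_max_def G.Max_eig mu_def[symmetric] using mupos by simp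
  define Mx where "Mx = Max ((\<lambda>i. (norm (u i))^2) ` {1..c})"
  have uMx: "\<And>i. i \<in> {1..c} \<Longrightarrow> (norm (u i))^2 \<le> Mx" unfolding Mx_def by (intro Max_ge) auto
  have lamMx: "lam \<le> real c * Mx"
  proof -
    let ?a = "axis 1 1 :: pt"
    have "lam * (?a \<bullet> ?a) \<le> (\<Sum>i=1..c. (?a \<bullet> u i)^2)" using R by blast
    also have "\<dots> \<le> (\<Sum>i=1..c. Mx)"
    proof (rule sum_mono)
      fix i assume i: "i \<in> {1..c}"
      have "?a \<bullet> u i = u i $ 1" by (simp add: inner_pt axis_def)
      then have "(?a \<bullet> u i)^2 \<le> (norm (u i))^2" by (simp add: norm_sq_pt)
      then show "(?a \<bullet> u i)^2 \<le> Mx" using uMx[OF i] by linarith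
    qed
    finally show ?thesis by simp
  qed
  have Mxnn: "Mx \<ge> 0"
  proof -
    have "1 \<in> {1..c}" using c0 by simp
    then have "(norm (u 1))^2 \<le> Mx" by (rule uMx)
    moreover have "0 \<le> (norm (u 1))^2" by simp
    ultimately show ?thesis by (rule order_trans[rotated])
  qed
  have frob_neg: "frob_norm (Astar - mat 1) ^ 2 = frob_norm (mat 1 - Astar) ^ 2"
    unfolding frob_sq by (simp add: inner_diff inner_commute)
  define V where "V k = mu / c * ((A k - Astar) \<bullet> (A k - Astar)) + (b k - bstar) \<bullet> (b k - bstar)" for k
  define \<rho> where "\<rho> = 1 - lam / (2 * mu)"
  have \<rho>_nn: "0 \<le> \<rho>" "\<rho> \<le> 1" using lampos lm_mu mupos by (auto simp: \<rho>_def field_simps)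
  have tApos: "tA > 0" unfolding tA_def smax using mupos cp sigma_pos by simp
  have tAeq: "8 * pi * \<sigma>^4 / tA = mu / c" unfolding tA_def smax using mupos cp sigma_pos by (simp add: field_simps)
  have V0: "V 0 = mu / c * frob_norm (mat 1 - Astar)^2 + (norm bstar)^2"
    unfolding V_def A0 b0 frob_sq by (simp add: power2_norm_eq_inner)
  have V0nn: "V 0 \<ge> 0" unfolding V_def using mupos cp by (simp add: add_nonneg_nonneg)
  have sig: "2 * Mx * c / lam * V 0 \<le> \<sigma>^2"
  proof -
    have "2 * Mx * c / lam * V 0 = 2 * Mx / lam * (mu * frob_norm (Astar - mat 1) ^ 2 + real c * (norm bstar)^2)"
      unfolding V0 frob_neg using cp lampos by (simp add: field_simps)
    moreover have "2 * Mx / lam * (mu * frob_norm (Astar - mat 1) ^ 2 + real c * (norm bstar)^2) \<le> \<sigma>^2"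
      using sigma_large unfolding smin smax Mx_def[symmetric] .
    ultimately show ?thesis by linarith
  qed
  have main: "V k \<le> \<rho>^(2*k) * V 0" for k
  proof (induction k)
    case 0 then show ?case by simp
  next
    case (Suc k)
    have Vk: "V k \<le> V 0"
    proof -
      have "\<rho>^(2*k) \<le> 1" using \<rho>_nn by (simp add: power_le_one)
      then have "\<rho>^(2*k) * V 0 \<le> V 0" using V0nn by (simp add: mult_left_le_one_le)
      then show ?thesis using Suc.IH by simp
    qed
    obtain N where N: "open N" "A k \<in> N" "\<forall>A'\<in>N. invertible A' \<and> psd (\<sigma>^2 *\<^sub>R mat 1 - \<sigma>0^2 *\<^sub>R (A' ** transpose A'))"
      using well_defined[of k] by blast
    have eqN: "\<And>A'. A' \<in> N \<Longrightarrow> Fcl c u v \<sigma> A' (b k) = phi_inv c u v \<sigma> \<sigma>0 A' (b k)"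
      using N(3) by (intro phi_inv_closed[symmetric] sigma_pos sigma0_nonneg) (auto simp: invertible_det2)
    have dAk: "det (A k) \<noteq> 0" and Pk: "psd (\<sigma>^2 *\<^sub>R mat 1 - \<sigma>0^2 *\<^sub>R (A k ** transpose (A k)))"
      using N(2,3) by (auto simp: invertible_det2)
    have gA: "grad_A (phi_inv c u v \<sigma> \<sigma>0) (A k) (b k) = gradA_cl c u v \<sigma> (A k) (b k)"
    proof -
      have "GDERIV (\<lambda>A'. phi_inv c u v \<sigma> \<sigma>0 A' (b k)) (A k) :> gradA_cl c u v \<sigma> (A k) (b k)"
        using Fcl_gderiv_A[OF sigma_pos c0, of u v "b k" "A k"] unfolding gderiv_def
        by (rule has_derivative_transform_within_open[OF _ N(1) N(2) eqN])
      then show ?thesis unfolding grad_A_def by (rule gderiv_unique)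
    qed
    have gb: "grad_b (phi_inv c u v \<sigma> \<sigma>0) (A k) (b k) = gradb_cl c u v \<sigma> (A k) (b k)"
    proof -
      have "(\<lambda>b'. phi_inv c u v \<sigma> \<sigma>0 (A k) b') = (\<lambda>b'. Fcl c u v \<sigma> (A k) b')"
        by (rule ext) (rule phi_inv_closed[OF dAk sigma_pos sigma0_nonneg Pk])
      then show ?thesis unfolding grad_b_def using Fcl_gderiv_b[OF sigma_pos c0] gderiv_unique by metis
    qed
    define D where "D = A k - Astar"
    define d where "d = b k - bstar"
    have r: "\<And>i. i \<in> {1..c} \<Longrightarrow> A k *v u i + b k - v i = D *v u i + d"
      using v_def by (simp add: D_def d_def matrix_vector_mult_diff_rdistrib algebra_simps)
    define e where "e i = exp (- ((norm (D *v u i + d))^2) / (4 * \<sigma>^2))" for i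
    have VkD: "V k = mu / c * (D \<bullet> D) + d \<bullet> d" by (simp add: V_def D_def d_def)
    have e_bnd: "1/2 \<le> e i \<and> e i \<le> 1" if i: "i \<in> {1..c}" for i
    proof
      show "e i \<le> 1" unfolding e_def using sigma_pos by simp
      have "(D *v u i + d) \<bullet> (D *v u i + d) \<le> 2 * ((D *v u i) \<bullet> (D *v u i) + d \<bullet> d)" by (rule sum_sq_le)
      also have "\<dots> \<le> 2 * ((D \<bullet> D) * Mx + d \<bullet> d)"
      proof -
        have "(D *v u i) \<bullet> (D *v u i) \<le> (D \<bullet> D) * (u i \<bullet> u i)" by (rule mv_norm_le)
        also have "\<dots> \<le> (D \<bullet> D) * Mx" using uMx[OF i] by (intro mult_left_mono) (auto simp: power2_norm_eq_inner)
        finally show ?thesis by simp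
      qed
      also have "\<dots> \<le> 2 * Mx * c / lam * V k"
      proof -
        have a1: "Mx \<le> Mx * c / lam * (mu / c)" using lampos lm_mu cp Mxnn
          by (simp add: field_simps mult_left_mono)
        have a2: "1 \<le> Mx * c / lam" using lamMx lampos by (simp add: field_simps)
        have "2 * ((D \<bullet> D) * Mx + d \<bullet> d) \<le> 2 * ((D \<bullet> D) * (Mx * c / lam * (mu / c)) + (Mx * c / lam) * (d \<bullet> d))"
        proof -
          have b1: "(D \<bullet> D) * Mx \<le> (D \<bullet> D) * (Mx * c / lam * (mu / c))" using a1 by (rule mult_left_mono) simp
          have b2: "1 * (d \<bullet> d) \<le> (Mx * c / lam) * (d \<bullet> d)" using a2 by (rule mult_right_mono) simp
          show ?thesis using b1 b2 by simp
        qed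
        also have "\<dots> = 2 * Mx * c / lam * V k" unfolding VkD using lampos cp by (simp add: field_simps)
        finally show ?thesis .
      qed
      also have "\<dots> \<le> 2 * Mx * c / lam * V 0" using Vk lampos Mxnn cp by (intro mult_left_mono) auto
      also have "\<dots> \<le> \<sigma>^2" by (rule sig)
      finally have t: "(norm (D *v u i + d))^2 / \<sigma>^2 \<le> 1" using sigma_pos by (simp add: power2_norm_eq_inner)
      have "e i = exp (- ((norm (D *v u i + d))^2 / \<sigma>^2) / 4)" unfolding e_def by (simp add: field_simps)
      then show "1/2 \<le> e i" using exp_half[OF t] by simp
    qed
    have AS: "A (Suc k) - Astar = D - (1/mu) *\<^sub>R (\<Sum>i=1..c. e i *\<^sub>R outer (D *v u i + d) (u i))"
    proof -
      have "tA *\<^sub>R gradA_cl c u v \<sigma> (A k) (b k) = (tA * (1 / (8 * pi * \<sigma>^4 * real c))) *\<^sub>R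
          (\<Sum>i=1..c. exp (- ((norm (A k *v u i + b k - v i))^2) / (4 * \<sigma>^2)) *\<^sub>R outer (A k *v u i + b k - v i) (u i))"
        by (simp add: gradA_cl_def)
      also have "tA * (1 / (8 * pi * \<sigma>^4 * real c)) = 1 / mu"
        unfolding tA_def smax using cp sigma_pos mupos by (simp add: field_simps)
      also have "(\<Sum>i=1..c. exp (- ((norm (A k *v u i + b k - v i))^2) / (4 * \<sigma>^2)) *\<^sub>R outer (A k *v u i + b k - v i) (u i))
          = (\<Sum>i=1..c. e i *\<^sub>R outer (D *v u i + d) (u i))"
        by (rule sum.cong) (simp_all add: r e_def)
      finally show ?thesis unfolding A_step gA D_def by simp
    qed
    have bS: "b (Suc k) - bstar = d - (1/real c) *\<^sub>R (\<Sum>i=1..c. e i *\<^sub>R (D *v u i + d))"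
    proof -
      have "tb *\<^sub>R gradb_cl c u v \<sigma> (A k) (b k) = (tb * (1 / (8 * pi * \<sigma>^4 * real c))) *\<^sub>R
          (\<Sum>i=1..c. exp (- ((norm (A k *v u i + b k - v i))^2) / (4 * \<sigma>^2)) *\<^sub>R (A k *v u i + b k - v i))"
        by (simp add: gradb_cl_def)
      also have "tb * (1 / (8 * pi * \<sigma>^4 * real c)) = 1 / real c"
        unfolding tb_def using cp sigma_pos by (simp add: field_simps)
      also have "(\<Sum>i=1..c. exp (- ((norm (A k *v u i + b k - v i))^2) / (4 * \<sigma>^2)) *\<^sub>R (A k *v u i + b k - v i))
          = (\<Sum>i=1..c. e i *\<^sub>R (D *v u i + d))"
        by (rule sum.cong) (simp_all add: r e_def)
      finally show ?thesis unfolding b_step gb d_def by simp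
    qed
    have step: "V (Suc k) \<le> (1 - lam/(2*mu))^2 * V k"
      unfolding V_def AS bS VkD[unfolded V_def]
      using key_step[OF c0 centered R lampos lm_mu e_bnd, where D=D and d=d] by (simp add: VkD)
    have "V (Suc k) \<le> \<rho>^2 * (\<rho>^(2*k) * V 0)"
      using step Suc.IH \<rho>_nn unfolding \<rho>_def[symmetric]
      by (meson mult_left_mono order_trans zero_le_power2)
    then show ?case by (simp add: power_add power_mult_distrib mult.assoc[symmetric] power2_eq_square[symmetric] power_mult[symmetric])
  qed
  have kap: "1 - 1 / (2 * \<kappa>) = \<rho>" unfolding kappa_def smax smin \<rho>_def using lampos mupos by (simp add: field_simps)
  show ?thesis unfolding kap tAeq frob_sq V0[symmetric]
    using main[of k] by (simp add: V_def power2_norm_eq_inner A0 b0)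
qed

end
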